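(* For every $\eta\in(\mathbb R\cup\{\infty\})^M$ and every ideal $\mathcal I\subset\mathbb K[x^*,y]$, one has $(\operatorname{In}_{\omega,\eta}\mathcal I)^{e}=\operatorname{In}_\eta(\mathcal I^{e})$, where ${}^e$ denotes extension of ideals from $\mathbb K[x^*,y]$ to $S_\omega[y]$.
   Context: Let $\mathbb{K}$ be an algebraically closed field of characteristic zero, $N,M$ positive integers, $\omega\in\mathbb{R}^N$ with coordinates linearly independent over $\mathbb{Q}$. $S_\omega$ is the field of $\omega$-positive Puiseux series: formal sums $\phi=\sum_{\alpha\in\mathbb Q^N}c_\alpha x^\alpha$ ($c_\alpha\in\mathbb K$) with exponent set $\mathcal E(\phi)$ contained in $\frac1k\mathbb Z^N$ for some $k$ and with $\mathcal E(x^\gamma\phi)\subset\sigma$ for some $\gamma\in\mathbb Q^N$ and some rational polyhedral cone $\sigma$ with $v\cdot\omega\ge0$ on $\sigma$. $\operatorname{ord}_\omega(\phi)=\min_{\alpha\in\mathcal E(\phi)}\omega\cdot\alpha$, $\operatorname{in}_\omega(\phi)$ the term $c_\alpha x^\alpha$ attaining it ($\operatorname{ord}_\omega 0=\infty$, $\operatorname{in}_\omega0=0$). Conventions $\infty\cdot a=\infty$ ($a\ne0$), $\infty\cdot0=0$; $\Lambda(\eta)=\{i:\eta_i\neq\infty\}$. For $f=\sum_\beta\phi_\beta y^\beta\in S_\omega[y]$: $\operatorname{ord}_\eta(f)=\min_{\phi_\beta\ne0}(\operatorname{ord}_\omega\phi_\beta+\eta\cdot\beta)$, and if finite $\operatorname{in}_\eta(f)=\sum_{\operatorname{ord}_\omega\phi_\beta+\eta\cdot\beta=\operatorname{ord}_\eta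 f}\operatorname{in}_\omega(\phi_\beta)y^\beta$; for an ideal $\mathfrak I\subset S_\omega[y]$, $\operatorname{In}_\eta\mathfrak I$ is generated by $\{\operatorname{in}_\eta f:f\in\mathfrak I,\operatorname{ord}_\eta f<\infty\}\cup\{y_i:i\notin\Lambda(\eta)\}$. Let $\mathbb K[x^*,y]=\mathbb K[x_1^{\pm1},\dots,x_N^{\pm1},y_1,\dots,y_M]\subset S_\omega[y]$. For $f=\sum a_{\alpha,\beta}x^\alpha y^\beta\in\mathbb K[x^*,y]$: $\operatorname{ord}_{\omega,\eta}(f)=\min_{a_{\alpha,\beta}\ne0}(\omega\cdot\alpha+\eta\cdot\beta)$; $\operatorname{in}_{\omega,\eta}(f)$ is the sum of the terms $a_{\alpha,\beta}x^\alpha y^\beta$ attaining this minimum if it is finite, and $0$ otherwise. For an ideal $\mathcal I\subset\mathbb K[x^*,y]$, $\operatorname{In}_{\omega,\eta}\mathcal I$ is the ideal of $\mathbb K[x^*,y]$ generated by $\{\operatorname{in}_{\omega,\eta}f:f\in\mathcal I\}\cup\{y_i:i\notin\Lambda(\eta)\}$. *)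

theory Defs
  imports "HOL-Library.Function_Algebras" "HOL-Library.Extended_Real"
          "HOL-Computational_Algebra.Polynomial"
begin

text \<open>
The x-variables are indexed by a finite type 'n (N = CARD('n)),
the y-variables by a finite type 'm (M = CARD('m)).
An element of S_omega[y] (and of K[x^*,y] as a subset) is represented by its
coefficient function  f :: ('m => nat) => ('n => rat) => 'k :
f beta is the Puiseux-series coefficient phi_beta of y^beta, and
f beta alpha is the coefficient of x^alpha y^beta.
\<close>

definition alg_closed_field :: "'k::field itself \<Rightarrow> bool" where
  "alg_closed_field _ \<longleftrightarrow> (\<forall>p::'k poly. degree p > 0 \<longrightarrow> (\<exists>z. poly p z = 0))"

definition rat_lin_indep :: "('n::finite \<Rightarrow> real) \<Rightarrow> bool" where
  "rat_lin_indep \<omega> \<longleftrightarrow>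
     (\<forall>q::'n \<Rightarrow> rat. (\<Sum>i\<in>UNIV. real_of_rat (q i) * \<omega> i) = 0 \<longrightarrow> q = (\<lambda>_. 0))"

definition wdot :: "('n::finite \<Rightarrow> real) \<Rightarrow> ('n \<Rightarrow> rat) \<Rightarrow> real" where
  "wdot \<omega> \<alpha> = (\<Sum>i\<in>UNIV. \<omega> i * real_of_rat (\<alpha> i))"

text \<open>eta . beta with conventions infinity * a = infinity (a \<noteq> 0), infinity * 0 = 0.\<close>
definition edot :: "('m::finite \<Rightarrow> ereal) \<Rightarrow> ('m \<Rightarrow> nat) \<Rightarrow> ereal" where
  "edot \<eta> \<beta> = (\<Sum>i\<in>UNIV. if \<beta> i = 0 then 0 else \<eta> i * ereal (real (\<beta> i)))"

definition rat_cone :: "('n \<Rightarrow> rat) set \<Rightarrow> ('n \<Rightarrow> rat) set" where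
  "rat_cone V = {v. \<exists>t. (\<forall>w\<in>V. t w \<ge> (0::rat)) \<and> v = (\<lambda>i. \<Sum>w\<in>V. t w * w i)}"

definition puiseux :: "('n::finite \<Rightarrow> real) \<Rightarrow> (('n \<Rightarrow> rat) \<Rightarrow> 'k::zero) \<Rightarrow> bool" where
  "puiseux \<omega> \<phi> \<longleftrightarrow>
     (\<exists>k::nat. k > 0 \<and> (\<forall>\<alpha>. \<phi> \<alpha> \<noteq> 0 \<longrightarrow> (\<forall>i. of_nat k * \<alpha> i \<in> \<int>))) \<and>
     (\<exists>\<gamma> V. finite V \<and> (\<forall>v\<in>rat_cone V. wdot \<omega> v \<ge> 0) \<and>
             (\<forall>\<alpha>. \<phi> \<alpha> \<noteq> 0 \<longrightarrow> (\<lambda>i. \<alpha> i + \<gamma> i) \<in> rat_cone V))"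

text \<open>Elements of S_omega[y]\<close>
definition spoly :: "('n::finite \<Rightarrow> real) \<Rightarrow> (('m \<Rightarrow> nat) \<Rightarrow> ('n \<Rightarrow> rat) \<Rightarrow> 'k::zero) \<Rightarrow> bool" where
  "spoly \<omega> f \<longleftrightarrow> finite {\<beta>. f \<beta> \<noteq> (\<lambda>_. 0)} \<and> (\<forall>\<beta>. puiseux \<omega> (f \<beta>))"

text \<open>Elements of K[x^*,y] (Laurent in x, polynomial in y)\<close>
definition laurent :: "(('m \<Rightarrow> nat) \<Rightarrow> ('n \<Rightarrow> rat) \<Rightarrow> 'k::zero) \<Rightarrow> bool" where
  "laurent f \<longleftrightarrow> finite {(\<beta>, \<alpha>). f \<beta> \<alpha> \<noteq> 0} \<and>
                 (\<forall>\<beta> \<alpha>. f \<beta> \<alpha> \<noteq> 0 \<longrightarrow> (\<forall>i. \<alpha> i \<in> \<int>))"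

text \<open>Product (the defining sum is finite for elements of S_omega[y]).\<close>
definition pmult :: "(('m \<Rightarrow> nat) \<Rightarrow> ('n \<Rightarrow> rat) \<Rightarrow> 'k::comm_ring_1)
     \<Rightarrow> (('m \<Rightarrow> nat) \<Rightarrow> ('n \<Rightarrow> rat) \<Rightarrow> 'k) \<Rightarrow> ('m \<Rightarrow> nat) \<Rightarrow> ('n \<Rightarrow> rat) \<Rightarrow> 'k" where
  "pmult f g = (\<lambda>\<beta> \<alpha>. \<Sum>(\<beta>1, \<alpha>1) \<in> {(\<beta>1, \<alpha>1). \<beta>1 \<le> \<beta> \<and> f \<beta>1 \<alpha>1 \<noteq> 0 \<and> g (\<beta> - \<beta>1) (\<alpha> - \<alpha>1) \<noteq> 0}.
                    f \<beta>1 \<alpha>1 * g (\<beta> - \<beta>1) (\<alpha> - \<alpha>1))"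

definition gen_ideal :: "((('m \<Rightarrow> nat) \<Rightarrow> ('n \<Rightarrow> rat) \<Rightarrow> 'k::comm_ring_1) \<Rightarrow> bool)
     \<Rightarrow> (('m \<Rightarrow> nat) \<Rightarrow> ('n \<Rightarrow> rat) \<Rightarrow> 'k) set \<Rightarrow> (('m \<Rightarrow> nat) \<Rightarrow> ('n \<Rightarrow> rat) \<Rightarrow> 'k) set" where
  "gen_ideal C G = {(\<Sum>i<n. pmult (g i) (h i)) | (n::nat) g h. \<forall>i<n. C (g i) \<and> h i \<in> G}"

definition laurent_ideal :: "(('m \<Rightarrow> nat) \<Rightarrow> ('n \<Rightarrow> rat) \<Rightarrow> 'k::comm_ring_1) set \<Rightarrow> bool" where
  "laurent_ideal I \<longleftrightarrow> (\<forall>f\<in>I. laurent f) \<and> 0 \<in> I \<and> (\<forall>f\<in>I. \<forall>g\<in>I. f + g \<in> I) \<and>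
      (\<forall>f\<in>I. \<forall>g. laurent g \<longrightarrow> pmult g f \<in> I)"

definition ext_ideal :: "('n::finite \<Rightarrow> real) \<Rightarrow> (('m \<Rightarrow> nat) \<Rightarrow> ('n \<Rightarrow> rat) \<Rightarrow> 'k::comm_ring_1) set
     \<Rightarrow> (('m \<Rightarrow> nat) \<Rightarrow> ('n \<Rightarrow> rat) \<Rightarrow> 'k) set" where
  "ext_ideal \<omega> I = gen_ideal (spoly \<omega>) I"

definition yvar :: "'m \<Rightarrow> ('m \<Rightarrow> nat) \<Rightarrow> ('n \<Rightarrow> rat) \<Rightarrow> 'k::comm_ring_1" where
  "yvar i = (\<lambda>\<beta> \<alpha>. if \<beta> = (\<lambda>j. if j = i then 1 else 0) \<and> \<alpha> = (\<lambda>_. 0) then 1 else 0)"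

definition ord_w :: "('n::finite \<Rightarrow> real) \<Rightarrow> (('n \<Rightarrow> rat) \<Rightarrow> 'k::zero) \<Rightarrow> ereal" where
  "ord_w \<omega> \<phi> = (INF \<alpha>\<in>{\<alpha>. \<phi> \<alpha> \<noteq> 0}. ereal (wdot \<omega> \<alpha>))"

definition in_w :: "('n::finite \<Rightarrow> real) \<Rightarrow> (('n \<Rightarrow> rat) \<Rightarrow> 'k::zero) \<Rightarrow> ('n \<Rightarrow> rat) \<Rightarrow> 'k" where
  "in_w \<omega> \<phi> = (\<lambda>\<alpha>. if \<phi> \<alpha> \<noteq> 0 \<and> ereal (wdot \<omega> \<alpha>) = ord_w \<omega> \<phi> then \<phi> \<alpha> else 0)"

definition ord_eta :: "('n::finite \<Rightarrow> real) \<Rightarrow> ('m::finite \<Rightarrow> ereal)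
     \<Rightarrow> (('m \<Rightarrow> nat) \<Rightarrow> ('n \<Rightarrow> rat) \<Rightarrow> 'k::zero) \<Rightarrow> ereal" where
  "ord_eta \<omega> \<eta> f = (INF \<beta>\<in>{\<beta>. f \<beta> \<noteq> (\<lambda>_. 0)}. ord_w \<omega> (f \<beta>) + edot \<eta> \<beta>)"

definition in_eta :: "('n::finite \<Rightarrow> real) \<Rightarrow> ('m::finite \<Rightarrow> ereal)
     \<Rightarrow> (('m \<Rightarrow> nat) \<Rightarrow> ('n \<Rightarrow> rat) \<Rightarrow> 'k::zero) \<Rightarrow> ('m \<Rightarrow> nat) \<Rightarrow> ('n \<Rightarrow> rat) \<Rightarrow> 'k" where
  "in_eta \<omega> \<eta> f = (\<lambda>\<beta>. if f \<beta> \<noteq> (\<lambda>_. 0) \<and> ord_w \<omega> (f \<beta>) + edot \<eta> \<beta> = ord_eta \<omega> \<eta> f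
                          then in_w \<omega> (f \<beta>) else (\<lambda>_. 0))"

definition In_eta :: "('n::finite \<Rightarrow> real) \<Rightarrow> ('m::finite \<Rightarrow> ereal)
     \<Rightarrow> (('m \<Rightarrow> nat) \<Rightarrow> ('n \<Rightarrow> rat) \<Rightarrow> 'k::comm_ring_1) set \<Rightarrow> (('m \<Rightarrow> nat) \<Rightarrow> ('n \<Rightarrow> rat) \<Rightarrow> 'k) set" where
  "In_eta \<omega> \<eta> J = gen_ideal (spoly \<omega>)
      ({in_eta \<omega> \<eta> f | f. f \<in> J \<and> ord_eta \<omega> \<eta> f < \<infinity>} \<union> {yvar i | i. \<eta> i = \<infinity>})"

definition ord_weta :: "('n::finite \<Rightarrow> real) \<Rightarrow> ('m::finite \<Rightarrow> ereal)
     \<Rightarrow> (('m \<Rightarrow> nat) \<Rightarrow> ('n \<Rightarrow> rat) \<Rightarrow> 'k::zero) \<Rightarrow> ereal" where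
  "ord_weta \<omega> \<eta> f = (INF (\<beta>, \<alpha>)\<in>{(\<beta>, \<alpha>). f \<beta> \<alpha> \<noteq> 0}. ereal (wdot \<omega> \<alpha>) + edot \<eta> \<beta>)"

definition in_weta :: "('n::finite \<Rightarrow> real) \<Rightarrow> ('m::finite \<Rightarrow> ereal)
     \<Rightarrow> (('m \<Rightarrow> nat) \<Rightarrow> ('n \<Rightarrow> rat) \<Rightarrow> 'k::zero) \<Rightarrow> ('m \<Rightarrow> nat) \<Rightarrow> ('n \<Rightarrow> rat) \<Rightarrow> 'k" where
  "in_weta \<omega> \<eta> f = (\<lambda>\<beta> \<alpha>. if ord_weta \<omega> \<eta> f < \<infinity> \<and> f \<beta> \<alpha> \<noteq> 0 \<and>
                              ereal (wdot \<omega> \<alpha>) + edot \<eta> \<beta> = ord_weta \<omega> \<eta> f then f \<beta> \<alpha> else 0)"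

definition In_weta :: "('n::finite \<Rightarrow> real) \<Rightarrow> ('m::finite \<Rightarrow> ereal)
     \<Rightarrow> (('m \<Rightarrow> nat) \<Rightarrow> ('n \<Rightarrow> rat) \<Rightarrow> 'k::comm_ring_1) set \<Rightarrow> (('m \<Rightarrow> nat) \<Rightarrow> ('n \<Rightarrow> rat) \<Rightarrow> 'k) set" where
  "In_weta \<omega> \<eta> I = gen_ideal laurent
      ({in_weta \<omega> \<eta> f | f. f \<in> I} \<union> {yvar i | i. \<eta> i = \<infinity>})"

end

theory Submission
  imports Defs
begin


lemma sum_fun_apply: "(sum f A) x = sum (\<lambda>a. f a x) A"
  by (induction A rule: infinite_finite_induct) auto

definition supp :: "(('m \<Rightarrow> nat) \<Rightarrow> ('n \<Rightarrow> rat) \<Rightarrow> 'k::zero) \<Rightarrow> (('m \<Rightarrow> nat) \<times> ('n \<Rightarrow> rat)) set" where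
  "supp f = {(b,a). f b a \<noteq> 0}"

lemma pmult_alt:
  fixes f h :: "('m \<Rightarrow> nat) \<Rightarrow> ('n \<Rightarrow> rat) \<Rightarrow> 'k::comm_ring_1"
  assumes "finite A" "supp h \<subseteq> A"
  shows "pmult f h \<beta> \<alpha> = (\<Sum>p\<in>{p\<in>A. fst p \<le> \<beta>}. f (\<beta> - fst p) (\<alpha> - snd p) * h (fst p) (snd p))"
proof -
  let ?S = "{(\<beta>1, \<alpha>1). \<beta>1 \<le> \<beta> \<and> f \<beta>1 \<alpha>1 \<noteq> 0 \<and> h (\<beta> - \<beta>1) (\<alpha> - \<alpha>1) \<noteq> 0}"
  let ?T = "{p\<in>A. fst p \<le> \<beta> \<and> f (\<beta> - fst p) (\<alpha> - snd p) \<noteq> 0 \<and> h (fst p) (snd p) \<noteq> 0}"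
  have le: "\<And>x y :: 'm \<Rightarrow> nat. x \<le> y \<Longrightarrow> y - x \<le> y" by (simp add: le_fun_def)
  have dd: "\<And>x y :: 'm \<Rightarrow> nat. x \<le> y \<Longrightarrow> y - (y - x) = x" by (auto simp: le_fun_def fun_eq_iff)
  have "pmult f h \<beta> \<alpha> = (\<Sum>(\<beta>1, \<alpha>1)\<in>?S. f \<beta>1 \<alpha>1 * h (\<beta> - \<beta>1) (\<alpha> - \<alpha>1))"
    by (simp add: pmult_def)
  also have "\<dots> = (\<Sum>p\<in>?T. f (\<beta> - fst p) (\<alpha> - snd p) * h (fst p) (snd p))"
  proof (rule sum.reindex_bij_witness[where i="\<lambda>p. (\<beta> - fst p, \<alpha> - snd p)" and j="\<lambda>p. (\<beta> - fst p, \<alpha> - snd p)"])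
  qed (use assms(2) in \<open>auto simp: supp_def dd le\<close>)
  also have "\<dots> = (\<Sum>p\<in>{p\<in>A. fst p \<le> \<beta>}. f (\<beta> - fst p) (\<alpha> - snd p) * h (fst p) (snd p))"
    by (rule sum.mono_neutral_left) (use assms(1) in auto)
  finally show ?thesis .
qed

definition fsp :: "(('m \<Rightarrow> nat) \<Rightarrow> ('n \<Rightarrow> rat) \<Rightarrow> 'k::zero) \<Rightarrow> bool" where
  "fsp f \<longleftrightarrow> finite (supp f)"

definition shift :: "('m \<Rightarrow> nat) \<Rightarrow> ('n \<Rightarrow> rat) \<Rightarrow> (('m \<Rightarrow> nat) \<Rightarrow> ('n \<Rightarrow> rat) \<Rightarrow> 'k::zero) \<Rightarrow> ('m \<Rightarrow> nat) \<Rightarrow> ('n \<Rightarrow> rat) \<Rightarrow> 'k" where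
  "shift tb ta f = (\<lambda>\<beta> \<alpha>. if tb \<le> \<beta> then f (\<beta> - tb) (\<alpha> - ta) else 0)"

definition smul :: "'k::times \<Rightarrow> (('m \<Rightarrow> nat) \<Rightarrow> ('n \<Rightarrow> rat) \<Rightarrow> 'k) \<Rightarrow> ('m \<Rightarrow> nat) \<Rightarrow> ('n \<Rightarrow> rat) \<Rightarrow> 'k" where
  "smul c f = (\<lambda>\<beta> \<alpha>. c * f \<beta> \<alpha>)"

definition mon :: "('m \<Rightarrow> nat) \<Rightarrow> ('n \<Rightarrow> rat) \<Rightarrow> 'k::zero \<Rightarrow> ('m \<Rightarrow> nat) \<Rightarrow> ('n \<Rightarrow> rat) \<Rightarrow> 'k" where
  "mon tb ta c = (\<lambda>\<beta> \<alpha>. if \<beta> = tb \<and> \<alpha> = ta then c else 0)"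

lemma pmult_fsp:
  fixes f h :: "('m \<Rightarrow> nat) \<Rightarrow> ('n \<Rightarrow> rat) \<Rightarrow> 'k::comm_ring_1"
  assumes "fsp h"
  shows "pmult f h \<beta> \<alpha> = (\<Sum>p\<in>{p\<in>supp h. fst p \<le> \<beta>}. f (\<beta> - fst p) (\<alpha> - snd p) * h (fst p) (snd p))"
  using assms by (intro pmult_alt) (auto simp: fsp_def)

lemma pmult_add_left:
  fixes f1 f2 h :: "('m \<Rightarrow> nat) \<Rightarrow> ('n \<Rightarrow> rat) \<Rightarrow> 'k::comm_ring_1"
  assumes "fsp h"
  shows "pmult (f1 + f2) h = pmult f1 h + pmult f2 h"
  by (auto simp: fun_eq_iff pmult_fsp[OF assms] distrib_right sum.distrib)

lemma pmult_zero_left: "fsp h \<Longrightarrow> pmult 0 h = 0"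
  by (auto simp: fun_eq_iff pmult_fsp)

lemma pmult_zero_right: "pmult f 0 = 0"
  by (auto simp: fun_eq_iff pmult_def)

lemma pmult_sum_left:
  fixes h :: "('m \<Rightarrow> nat) \<Rightarrow> ('n \<Rightarrow> rat) \<Rightarrow> 'k::comm_ring_1"
  assumes "fsp h" "finite S"
  shows "pmult (\<Sum>s\<in>S. F s) h = (\<Sum>s\<in>S. pmult (F s) h)"
  using assms(2)
proof (induction S rule: finite_induct)
  case empty
  then show ?case by (simp only: sum.empty pmult_zero_left[OF assms(1)])
next
  case (insert x T)
  then show ?case by (simp only: sum.insert[OF insert(1,2)] pmult_add_left[OF assms(1)])
qed

lemma fsp_zero[simp]: "fsp 0"
  by (auto simp: fsp_def supp_def)

lemma supp_add: "supp ((f::('m \<Rightarrow> nat) \<Rightarrow> ('n \<Rightarrow> rat) \<Rightarrow> 'k::comm_monoid_add) + g) \<subseteq> supp f \<union> supp g"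
  by (auto simp: supp_def)

lemma fsp_add: "fsp f \<Longrightarrow> fsp g \<Longrightarrow> fsp ((f::('m \<Rightarrow> nat) \<Rightarrow> ('n \<Rightarrow> rat) \<Rightarrow> 'k::comm_monoid_add) + g)"
  unfolding fsp_def using supp_add finite_subset by blast

lemma fsp_sum: fixes F :: "'s \<Rightarrow> ('m \<Rightarrow> nat) \<Rightarrow> ('n \<Rightarrow> rat) \<Rightarrow> 'k::comm_monoid_add" shows "finite S \<Longrightarrow> (\<And>s. s \<in> S \<Longrightarrow> fsp (F s)) \<Longrightarrow> fsp (\<Sum>s\<in>S. F s)"
  by (induction S rule: finite_induct) (auto intro: fsp_add)

lemma pmult_add_right:
  fixes f h1 h2 :: "('m \<Rightarrow> nat) \<Rightarrow> ('n \<Rightarrow> rat) \<Rightarrow> 'k::comm_ring_1"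
  assumes "fsp h1" "fsp h2"
  shows "pmult f (h1 + h2) = pmult f h1 + pmult f h2"
proof -
  let ?A = "supp h1 \<union> supp h2"
  have fA: "finite ?A" using assms by (auto simp: fsp_def)
  have s: "supp (h1 + h2) \<subseteq> ?A" "supp h1 \<subseteq> ?A" "supp h2 \<subseteq> ?A" using supp_add by auto
  show ?thesis
    by (auto simp: fun_eq_iff pmult_alt[OF fA s(1)] pmult_alt[OF fA s(2)] pmult_alt[OF fA s(3)]
           distrib_left sum.distrib)
qed

lemma pmult_sum_right:
  fixes f :: "('m \<Rightarrow> nat) \<Rightarrow> ('n \<Rightarrow> rat) \<Rightarrow> 'k::comm_ring_1"
  assumes "finite S" "\<And>s. s \<in> S \<Longrightarrow> fsp (H s)"
  shows "pmult f (\<Sum>s\<in>S. H s) = (\<Sum>s\<in>S. pmult f (H s))"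
  using assms
proof (induction S rule: finite_induct)
  case empty
  then show ?case by (simp only: sum.empty pmult_zero_right)
next
  case (insert x T)
  have "fsp (H x)" "fsp (sum H T)" using insert by (auto intro: fsp_sum)
  moreover have "pmult f (sum H T) = (\<Sum>s\<in>T. pmult f (H s))" using insert by auto
  ultimately show ?case using insert by (simp only: sum.insert[OF insert(1,2)] pmult_add_right)
qed

lemma nat_fun_facts:
  fixes b tb \<beta> :: "'m \<Rightarrow> nat"
  shows "b \<le> \<beta> \<Longrightarrow> tb \<le> \<beta> \<Longrightarrow> (tb \<le> \<beta> - b) = (b \<le> \<beta> - tb)"
    and "\<beta> - b - tb = \<beta> - tb - b"
    and "tb \<le> \<beta> - b \<Longrightarrow> tb \<le> \<beta>"
    and "tb \<le> \<beta> \<Longrightarrow> (b + tb \<le> \<beta>) = (b \<le> \<beta> - tb)"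
    and "b + tb \<le> \<beta> \<Longrightarrow> tb \<le> \<beta>"
    and "\<beta> - (b + tb) = \<beta> - tb - b"
    and "b + tb - tb = b"
    and "tb \<le> b + tb"
    and "b \<le> \<beta> \<Longrightarrow> \<beta> - b + b = \<beta>"
    and "b \<le> \<beta> \<Longrightarrow> \<beta> - b \<le> \<beta>"
  unfolding le_fun_def fun_eq_iff minus_apply plus_fun_apply
  subgoal apply (rule iffI) apply (intro allI, rename_tac x, (erule_tac x=x in allE)+, linarith)+ done
  subgoal by (intro allI) linarith
  subgoal by (intro allI) (metis diff_le_self le_trans)
  subgoal apply (rule iffI) apply (intro allI, rename_tac x, (erule_tac x=x in allE)+, linarith)+ done
  subgoal by (intro allI) (metis le_add2 le_trans)
  subgoal by (intro allI) linarith
  subgoal by (intro allI) linarith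
  subgoal by (intro allI) linarith
  subgoal by (intro allI, rename_tac x, (erule_tac x=x in allE)+, linarith)
  subgoal by (intro allI, rename_tac x, (erule_tac x=x in allE)+, linarith)
  done

lemma rat_fun_facts:
  fixes a ta \<alpha> :: "'n \<Rightarrow> rat"
  shows "\<alpha> - a - ta = \<alpha> - ta - a" "\<alpha> - (a + ta) = \<alpha> - ta - a" "a + ta - ta = a" "\<alpha> - a + a = \<alpha>"
  by (auto simp: fun_eq_iff)

lemma pmult_shift_left:
  fixes f h :: "('m \<Rightarrow> nat) \<Rightarrow> ('n \<Rightarrow> rat) \<Rightarrow> 'k::comm_ring_1"
  assumes "fsp h"
  shows "pmult (shift tb ta f) h = shift tb ta (pmult f h)"
proof (intro ext)
  fix \<beta> \<alpha>
  have fin: "finite {p\<in>supp h. fst p \<le> \<beta>}" using assms by (auto simp: fsp_def)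
  show "pmult (shift tb ta f) h \<beta> \<alpha> = shift tb ta (pmult f h) \<beta> \<alpha>"
  proof (cases "tb \<le> \<beta>")
    case True
    have "pmult (shift tb ta f) h \<beta> \<alpha> = (\<Sum>p\<in>{p\<in>supp h. fst p \<le> \<beta>}. 
       (if tb \<le> \<beta> - fst p then f (\<beta> - fst p - tb) (\<alpha> - snd p - ta) else 0) * h (fst p) (snd p))"
      unfolding pmult_fsp[OF assms] shift_def by (rule refl)
    also have "\<dots> = (\<Sum>p\<in>{p\<in>supp h. fst p \<le> \<beta> - tb}. f (\<beta> - tb - fst p) (\<alpha> - ta - snd p) * h (fst p) (snd p))"
    proof (rule sum.mono_neutral_cong_right[OF fin])
      show "{p \<in> supp h. fst p \<le> \<beta> - tb} \<subseteq> {p \<in> supp h. fst p \<le> \<beta>}"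
        using nat_fun_facts(10)[OF True] order_trans by blast
      show "\<forall>i\<in>{p \<in> supp h. fst p \<le> \<beta>} - {p \<in> supp h. fst p \<le> \<beta> - tb}.
          (if tb \<le> \<beta> - fst i then f (\<beta> - fst i - tb) (\<alpha> - snd i - ta) else 0) * h (fst i) (snd i) = 0"
      proof
        fix i assume i: "i \<in> {p \<in> supp h. fst p \<le> \<beta>} - {p \<in> supp h. fst p \<le> \<beta> - tb}"
        then have "\<not> tb \<le> \<beta> - fst i" using nat_fun_facts(1)[of "fst i" \<beta> tb] True by auto
        then show "(if tb \<le> \<beta> - fst i then f (\<beta> - fst i - tb) (\<alpha> - snd i - ta) else 0) * h (fst i) (snd i) = 0" by simp
      qed
      fix p assume p: "p \<in> {p \<in> supp h. fst p \<le> \<beta> - tb}"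
      then have "fst p \<le> \<beta>" using nat_fun_facts(10)[OF True] order_trans by blast
      then have "tb \<le> \<beta> - fst p" using p nat_fun_facts(1)[of "fst p" \<beta> tb] True by auto
      then show "(if tb \<le> \<beta> - fst p then f (\<beta> - fst p - tb) (\<alpha> - snd p - ta) else 0) * h (fst p) (snd p) =
          f (\<beta> - tb - fst p) (\<alpha> - ta - snd p) * h (fst p) (snd p)"
        by (simp only: if_True nat_fun_facts(2)[of \<beta> "fst p" tb] rat_fun_facts(1)[of \<alpha> "snd p" ta])
    qed
    also have "\<dots> = shift tb ta (pmult f h) \<beta> \<alpha>"
      unfolding pmult_fsp[OF assms] shift_def using True by simp
    finally show ?thesis .
  next
    case False
    have "\<forall>p\<in>{p\<in>supp h. fst p \<le> \<beta>}. shift tb ta f (\<beta> - fst p) (\<alpha> - snd p) * h (fst p) (snd p) = 0"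
      using False nat_fun_facts(3) unfolding shift_def by fastforce
    then have "pmult (shift tb ta f) h \<beta> \<alpha> = 0" unfolding pmult_fsp[OF assms] by (rule sum.neutral)
    then show ?thesis using False by (simp add: shift_def)
  qed
qed

lemma supp_shift: "supp (shift tb ta h) = (\<lambda>(b,a). (b + tb, a + ta)) ` supp h"
proof safe
  fix b a assume "(b, a) \<in> supp (shift tb ta h)"
  then have "tb \<le> b" "h (b - tb) (a - ta) \<noteq> 0" by (auto simp: supp_def shift_def split: if_splits)
  then show "(b, a) \<in> (\<lambda>(b,a). (b + tb, a + ta)) ` supp h"
    by (intro image_eqI[of _ _ "(b - tb, a - ta)"]) (auto simp: supp_def fun_eq_iff le_fun_def)
next
  fix b a assume "(b, a) \<in> supp h"
  then show "(b + tb, a + ta) \<in> supp (shift tb ta h)"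
    by (auto simp: supp_def shift_def nat_fun_facts(7,8) rat_fun_facts(3))
qed

lemma fsp_shift: "fsp h \<Longrightarrow> fsp (shift tb ta h)"
  by (simp add: fsp_def supp_shift)

lemma pmult_shift_right:
  fixes f h :: "('m \<Rightarrow> nat) \<Rightarrow> ('n \<Rightarrow> rat) \<Rightarrow> 'k::comm_ring_1"
  assumes "fsp h"
  shows "pmult f (shift tb ta h) = shift tb ta (pmult f h)"
proof (intro ext)
  fix \<beta> \<alpha>
  let ?g = "\<lambda>(b::'m\<Rightarrow>nat,a::'n\<Rightarrow>rat). (b + tb, a + ta)"
  have fin: "finite (supp h)" using assms by (auto simp: fsp_def)
  have inj: "inj_on ?g S" for S by (auto simp: inj_on_def fun_eq_iff)
  have "pmult f (shift tb ta h) \<beta> \<alpha> = (\<Sum>p\<in>{p\<in>?g ` supp h. fst p \<le> \<beta>}. f (\<beta> - fst p) (\<alpha> - snd p) * shift tb ta h (fst p) (snd p))"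
    by (rule pmult_alt) (use fin in \<open>auto simp: supp_shift\<close>)
  also have "{p\<in>?g ` supp h. fst p \<le> \<beta>} = ?g ` {q\<in>supp h. fst q + tb \<le> \<beta>}" by auto
  also have "(\<Sum>p\<in>?g ` {q\<in>supp h. fst q + tb \<le> \<beta>}. f (\<beta> - fst p) (\<alpha> - snd p) * shift tb ta h (fst p) (snd p))
      = (\<Sum>q\<in>{q\<in>supp h. fst q + tb \<le> \<beta>}. f (\<beta> - (fst q + tb)) (\<alpha> - (snd q + ta)) * h (fst q) (snd q))"
    by (subst sum.reindex[OF inj]) (auto simp: shift_def nat_fun_facts(7,8) rat_fun_facts(3) intro!: sum.cong)
  also have "\<dots> = shift tb ta (pmult f h) \<beta> \<alpha>"
  proof (cases "tb \<le> \<beta>")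
    case True
    then show ?thesis unfolding pmult_fsp[OF assms] shift_def
      by (auto simp: nat_fun_facts(4,6) rat_fun_facts(2) intro!: sum.cong)
  next
    case False
    then show ?thesis unfolding shift_def using nat_fun_facts(5) by (auto intro!: sum.neutral)
  qed
  finally show "pmult f (shift tb ta h) \<beta> \<alpha> = shift tb ta (pmult f h) \<beta> \<alpha>" .
qed

lemma supp_smul: "supp (smul c h) \<subseteq> supp (h :: ('m \<Rightarrow> nat) \<Rightarrow> ('n \<Rightarrow> rat) \<Rightarrow> 'k::comm_ring_1)"
  by (auto simp: supp_def smul_def)

lemma fsp_smul: "fsp h \<Longrightarrow> fsp (smul c (h :: ('m \<Rightarrow> nat) \<Rightarrow> ('n \<Rightarrow> rat) \<Rightarrow> 'k::comm_ring_1))"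
  using supp_smul finite_subset unfolding fsp_def by blast

lemma pmult_smul_right:
  fixes f h :: "('m \<Rightarrow> nat) \<Rightarrow> ('n \<Rightarrow> rat) \<Rightarrow> 'k::comm_ring_1"
  assumes "fsp h"
  shows "pmult f (smul c h) = pmult (smul c f) h"
proof (intro ext)
  fix \<beta> \<alpha>
  have fin: "finite (supp h)" using assms by (auto simp: fsp_def)
  show "pmult f (smul c h) \<beta> \<alpha> = pmult (smul c f) h \<beta> \<alpha>"
    by (simp add: pmult_alt[OF fin supp_smul] pmult_alt[OF fin subset_refl]) (simp add: smul_def mult_ac)
qed

lemma aux_eq_nat: fixes b tb \<beta> :: "'m \<Rightarrow> nat"
  shows "b \<le> \<beta> \<Longrightarrow> tb \<le> \<beta> \<Longrightarrow> (\<beta> - b = tb) = (b = \<beta> - tb)"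
  unfolding le_fun_def fun_eq_iff minus_apply
  apply (rule iffI) apply (intro allI, rename_tac x, (erule_tac x=x in allE)+, linarith)+ done

lemma aux_eq_rat: fixes a ta \<alpha> :: "'n \<Rightarrow> rat"
  shows "(\<alpha> - a = ta) = (a = \<alpha> - ta)"
  by (auto simp: fun_eq_iff) (metis add.commute diff_add_cancel diff_eq_eq)

lemma pmult_mon:
  fixes k :: "('m \<Rightarrow> nat) \<Rightarrow> ('n \<Rightarrow> rat) \<Rightarrow> 'k::comm_ring_1"
  assumes "fsp k"
  shows "pmult (mon tb ta c) k = smul c (shift tb ta k)"
proof (intro ext)
  fix \<beta> \<alpha>
  have fin: "finite {p\<in>supp k. fst p \<le> \<beta>}" using assms by (auto simp: fsp_def)
  show "pmult (mon tb ta c) k \<beta> \<alpha> = smul c (shift tb ta k) \<beta> \<alpha>"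
  proof (cases "tb \<le> \<beta>")
    case True
    have "pmult (mon tb ta c) k \<beta> \<alpha> = (\<Sum>p\<in>{p\<in>supp k. fst p \<le> \<beta>}. if p = (\<beta> - tb, \<alpha> - ta) then c * k (fst p) (snd p) else 0)"
      unfolding pmult_fsp[OF assms] mon_def
      apply (intro sum.cong refl)
      using True by (auto simp: aux_eq_nat aux_eq_rat)
    also have "\<dots> = (if (\<beta> - tb, \<alpha> - ta) \<in> {p\<in>supp k. fst p \<le> \<beta>} then c * k (\<beta> - tb) (\<alpha> - ta) else 0)"
      by (subst sum.delta[OF fin]) simp
    also have "\<dots> = smul c (shift tb ta k) \<beta> \<alpha>"
      using True nat_fun_facts(10)[OF True] by (auto simp: smul_def shift_def supp_def)
    finally show ?thesis .
  next
    case False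
    have "\<forall>p\<in>{p\<in>supp k. fst p \<le> \<beta>}. mon tb ta c (\<beta> - fst p) (\<alpha> - snd p) * k (fst p) (snd p) = 0"
      using False nat_fun_facts(10) by (auto simp: mon_def)
    then have "pmult (mon tb ta c) k \<beta> \<alpha> = 0" unfolding pmult_fsp[OF assms] by (rule sum.neutral)
    then show ?thesis using False by (simp add: smul_def shift_def)
  qed
qed

lemma pmult_one:
  fixes k :: "('m \<Rightarrow> nat) \<Rightarrow> ('n \<Rightarrow> rat) \<Rightarrow> 'k::comm_ring_1"
  assumes "fsp k"
  shows "pmult (mon 0 0 1) k = k"
  by (simp add: pmult_mon[OF assms]) (simp add: smul_def shift_def)

lemma fsp_pmult:
  fixes f h :: "('m \<Rightarrow> nat) \<Rightarrow> ('n \<Rightarrow> rat) \<Rightarrow> 'k::comm_ring_1"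
  assumes "fsp f" "fsp h"
  shows "fsp (pmult f h)"
proof -
  have "supp (pmult f h) \<subseteq> (\<lambda>(p,q). (fst p + fst q, snd p + snd q)) ` (supp f \<times> supp h)"
  proof
    fix x assume "x \<in> supp (pmult f h)"
    then obtain \<beta> \<alpha> where x: "x = (\<beta>, \<alpha>)" "pmult f h \<beta> \<alpha> \<noteq> 0" by (auto simp: supp_def)
    then have "(\<Sum>p\<in>{p\<in>supp h. fst p \<le> \<beta>}. f (\<beta> - fst p) (\<alpha> - snd p) * h (fst p) (snd p)) \<noteq> 0"
      unfolding pmult_fsp[OF assms(2)] by simp
    then obtain p where p0: "p \<in> {p\<in>supp h. fst p \<le> \<beta>}" "f (\<beta> - fst p) (\<alpha> - snd p) * h (fst p) (snd p) \<noteq> 0"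
      by (rule sum.not_neutral_contains_not_neutral)
    then have p: "p \<in> supp h" "fst p \<le> \<beta>" "f (\<beta> - fst p) (\<alpha> - snd p) * h (fst p) (snd p) \<noteq> 0" by auto
    then show "x \<in> (\<lambda>(p,q). (fst p + fst q, snd p + snd q)) ` (supp f \<times> supp h)"
      using x by (intro image_eqI[of _ _ "((\<beta> - fst p, \<alpha> - snd p), p)"]) (auto simp: supp_def nat_fun_facts(9) rat_fun_facts(4))
  qed
  moreover have "finite ((\<lambda>(p,q). (fst p + fst q, snd p + snd q)) ` (supp f \<times> supp h))"
    using assms unfolding fsp_def by (intro finite_imageI finite_SigmaI) 
  ultimately show ?thesis unfolding fsp_def by (rule finite_subset)
qed



lemma gen_ideal_0: "0 \<in> gen_ideal C G"
  unfolding gen_ideal_def by (rule CollectI, rule exI[of _ 0]) auto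

lemma gen_ideal_add_term:
  assumes "x \<in> gen_ideal C G" "C g" "h \<in> G"
  shows "x + pmult g h \<in> gen_ideal C G"
proof -
  obtain n :: nat and g1 h1 where x: "x = (\<Sum>i<n. pmult (g1 i) (h1 i))" "\<forall>i<n. C (g1 i) \<and> h1 i \<in> G"
    using assms(1) unfolding gen_ideal_def by blast
  let ?g = "g1(n := g)" and ?h = "h1(n := h)"
  have e1: "(\<Sum>i<Suc n. pmult (?g i) (?h i)) = (\<Sum>i<n. pmult (?g i) (?h i)) + pmult (?g n) (?h n)"
    by (rule sum.lessThan_Suc)
  have e2: "(\<Sum>i<n. pmult (?g i) (?h i)) = x" unfolding x by (intro sum.cong) auto
  have e3: "pmult (?g n) (?h n) = pmult g h" by simp
  have "x + pmult g h = (\<Sum>i<Suc n. pmult (?g i) (?h i))" unfolding e1 e2 e3 by (rule refl)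
  moreover have "\<forall>i<Suc n. C (?g i) \<and> ?h i \<in> G" using x assms by (auto simp: less_Suc_eq)
  ultimately show ?thesis unfolding gen_ideal_def by blast
qed

lemma gen_ideal_single: "C g \<Longrightarrow> h \<in> G \<Longrightarrow> pmult g h \<in> gen_ideal C G"
  using gen_ideal_add_term[OF gen_ideal_0] by (metis add_0)

lemma gen_ideal_add_sum:
  "a \<in> gen_ideal C G \<Longrightarrow> \<forall>i<n. C (g i) \<and> h i \<in> G \<Longrightarrow> a + (\<Sum>i<(n::nat). pmult (g i) (h i)) \<in> gen_ideal C G"
proof (induction n)
  case 0
  then show ?case by simp
next
  case (Suc n)
  have "\<forall>i<n. C (g i) \<and> h i \<in> G" using Suc.prems(2) by auto
  then have i1: "a + (\<Sum>i<n. pmult (g i) (h i)) \<in> gen_ideal C G" by (rule Suc.IH[OF Suc.prems(1)])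
  have i2: "C (g n)" "h n \<in> G" using Suc.prems by auto
  have "a + (\<Sum>i<n. pmult (g i) (h i)) + pmult (g n) (h n) \<in> gen_ideal C G"
    by (rule gen_ideal_add_term[OF i1 i2])
  then show ?case by (simp only: sum.lessThan_Suc add.assoc)
qed

lemma gen_ideal_add:
  assumes "a \<in> gen_ideal C G" "b \<in> gen_ideal C G"
  shows "a + b \<in> gen_ideal C G"
proof -
  obtain n :: nat and g h where b: "b = (\<Sum>i<n. pmult (g i) (h i))" "\<forall>i<n. C (g i) \<and> h i \<in> G"
    using assms(2) unfolding gen_ideal_def by blast
  show ?thesis unfolding b(1) by (rule gen_ideal_add_sum[OF assms(1) b(2)])
qed

lemma gen_ideal_sum:
  assumes "finite S" "\<And>s. s \<in> S \<Longrightarrow> F s \<in> gen_ideal C G"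
  shows "(\<Sum>s\<in>S. F s) \<in> gen_ideal C G"
  using assms by (induction S rule: finite_induct) (auto intro: gen_ideal_add gen_ideal_0)

lemma gen_ideal_elims:
  assumes "x \<in> gen_ideal C G"
  obtains n :: nat and g h where "x = (\<Sum>i<n. pmult (g i) (h i))" "\<forall>i<n. C (g i) \<and> h i \<in> G"
  using assms unfolding gen_ideal_def by blast

definition val :: "('n::finite \<Rightarrow> real) \<Rightarrow> ('m::finite \<Rightarrow> ereal) \<Rightarrow> ('m \<Rightarrow> nat) \<Rightarrow> ('n \<Rightarrow> rat) \<Rightarrow> ereal" where
  "val \<omega> \<eta> \<beta> \<alpha> = ereal (wdot \<omega> \<alpha>) + edot \<eta> \<beta>"

lemma ord_weta_le: "f \<beta> \<alpha> \<noteq> 0 \<Longrightarrow> ord_weta \<omega> \<eta> f \<le> val \<omega> \<eta> \<beta> \<alpha>"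
  unfolding ord_weta_def val_def by (rule INF_lower2[of "(\<beta>, \<alpha>)"]) auto

lemma ord_weta_ge: "(\<And>\<beta> \<alpha>. f \<beta> \<alpha> \<noteq> 0 \<Longrightarrow> c \<le> val \<omega> \<eta> \<beta> \<alpha>) \<Longrightarrow> c \<le> ord_weta \<omega> \<eta> f"
  unfolding ord_weta_def val_def by (rule INF_greatest) auto

lemma sum_nminf: "(\<And>x. x \<in> A \<Longrightarrow> f x \<noteq> -\<infinity>) \<Longrightarrow> sum f A \<noteq> (-\<infinity>::ereal)"
proof (induction A rule: infinite_finite_induct)
  case (insert x F)
  then have "f x \<noteq> -\<infinity>" "sum f F \<noteq> -\<infinity>" by auto
  then show ?case using insert by (simp add: sum.insert)
qed auto

lemma edot_nminf: "\<forall>i. \<eta> i \<noteq> -\<infinity> \<Longrightarrow> edot \<eta> \<beta> \<noteq> -\<infinity>"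
  unfolding edot_def
proof (rule sum_nminf)
  fix i assume "\<forall>i. \<eta> i \<noteq> -\<infinity>"
  then have "\<eta> i \<noteq> -\<infinity>" by auto
  then show "(if \<beta> i = 0 then 0 else \<eta> i * ereal (real (\<beta> i))) \<noteq> -\<infinity>"
    by (cases "\<eta> i") auto
qed

lemma val_nminf: "\<forall>i. \<eta> i \<noteq> -\<infinity> \<Longrightarrow> val \<omega> \<eta> \<beta> \<alpha> \<noteq> -\<infinity>"
  unfolding val_def using edot_nminf by (metis ereal_plus_eq_MInfty MInfty_neq_ereal(1))

lemma ord_w_le: "\<phi> \<alpha> \<noteq> 0 \<Longrightarrow> ord_w \<omega> \<phi> \<le> ereal (wdot \<omega> \<alpha>)"
  unfolding ord_w_def by (rule INF_lower2[of \<alpha>]) auto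

lemma ord_eta_le: "f \<beta> \<noteq> (\<lambda>_. 0) \<Longrightarrow> ord_eta \<omega> \<eta> f \<le> ord_w \<omega> (f \<beta>) + edot \<eta> \<beta>"
  unfolding ord_eta_def by (rule INF_lower2[of \<beta>]) auto

lemma ord_eta_eq:
  assumes "\<forall>i. \<eta> i \<noteq> -\<infinity>"
  shows "ord_eta \<omega> \<eta> f = ord_weta \<omega> \<eta> f"
proof (rule antisym)
  show "ord_eta \<omega> \<eta> f \<le> ord_weta \<omega> \<eta> f"
  proof (rule ord_weta_ge)
    fix \<beta> \<alpha> assume nz: "f \<beta> \<alpha> \<noteq> 0"
    then have "f \<beta> \<noteq> (\<lambda>_. 0)" by auto
    then have "ord_eta \<omega> \<eta> f \<le> ord_w \<omega> (f \<beta>) + edot \<eta> \<beta>" by (rule ord_eta_le)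
    also have "\<dots> \<le> ereal (wdot \<omega> \<alpha>) + edot \<eta> \<beta>" by (intro add_right_mono ord_w_le[of "f \<beta>" \<alpha> \<omega>] nz)
    finally show "ord_eta \<omega> \<eta> f \<le> val \<omega> \<eta> \<beta> \<alpha>" by (simp add: val_def)
  qed
next
  show "ord_weta \<omega> \<eta> f \<le> ord_eta \<omega> \<eta> f"
    unfolding ord_eta_def
  proof (rule INF_greatest)
    fix \<beta> assume "\<beta> \<in> {\<beta>. f \<beta> \<noteq> (\<lambda>_. 0)}"
    then obtain \<alpha>0 where a0: "f \<beta> \<alpha>0 \<noteq> 0" by auto
    have en: "edot \<eta> \<beta> \<noteq> -\<infinity>" using edot_nminf[OF assms] .
    show "ord_weta \<omega> \<eta> f \<le> ord_w \<omega> (f \<beta>) + edot \<eta> \<beta>"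
    proof (cases "edot \<eta> \<beta> = \<infinity>")
      case True
      then show ?thesis by simp
    next
      case False
      then obtain r where r: "edot \<eta> \<beta> = ereal r" using en by (cases "edot \<eta> \<beta>") auto
      have "ord_weta \<omega> \<eta> f - ereal r \<le> ord_w \<omega> (f \<beta>)"
        unfolding ord_w_def
      proof (rule INF_greatest)
        fix \<alpha> assume "\<alpha> \<in> {\<alpha>. f \<beta> \<alpha> \<noteq> 0}"
        then have "ord_weta \<omega> \<eta> f \<le> ereal (wdot \<omega> \<alpha>) + ereal r"
          using ord_weta_le[of f \<beta> \<alpha> \<omega> \<eta>] r by (simp add: val_def)
        then show "ord_weta \<omega> \<eta> f - ereal r \<le> ereal (wdot \<omega> \<alpha>)"
          by (simp add: ereal_minus_le)
      qed
      then show ?thesis using r by (simp add: ereal_minus_le)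
    qed
  qed
qed

lemma in_eta_eq:
  assumes "\<forall>i. \<eta> i \<noteq> -\<infinity>" "ord_eta \<omega> \<eta> f < \<infinity>"
  shows "in_eta \<omega> \<eta> f = in_weta \<omega> \<eta> f"
proof (intro ext)
  fix \<beta> \<alpha>
  let ?m = "ord_weta \<omega> \<eta> f"
  have m: "ord_eta \<omega> \<eta> f = ?m" by (rule ord_eta_eq[OF assms(1)])
  have mlt: "?m < \<infinity>" using assms(2) m by simp
  have iff: "(f \<beta> \<noteq> (\<lambda>_. 0) \<and> ord_w \<omega> (f \<beta>) + edot \<eta> \<beta> = ?m \<and> ereal (wdot \<omega> \<alpha>) = ord_w \<omega> (f \<beta>))
      = (ereal (wdot \<omega> \<alpha>) + edot \<eta> \<beta> = ?m)" if nz: "f \<beta> \<alpha> \<noteq> 0"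
  proof
    assume "f \<beta> \<noteq> (\<lambda>_. 0) \<and> ord_w \<omega> (f \<beta>) + edot \<eta> \<beta> = ?m \<and> ereal (wdot \<omega> \<alpha>) = ord_w \<omega> (f \<beta>)"
    then show "ereal (wdot \<omega> \<alpha>) + edot \<eta> \<beta> = ?m" by simp
  next
    assume eq: "ereal (wdot \<omega> \<alpha>) + edot \<eta> \<beta> = ?m"
    have fb: "f \<beta> \<noteq> (\<lambda>_. 0)" using nz by auto
    have en: "edot \<eta> \<beta> \<noteq> -\<infinity>" using edot_nminf[OF assms(1)] .
    have "edot \<eta> \<beta> \<noteq> \<infinity>" using eq mlt by auto
    then obtain r where r: "edot \<eta> \<beta> = ereal r" using en by (cases "edot \<eta> \<beta>") auto
    have le1: "?m \<le> ord_w \<omega> (f \<beta>) + edot \<eta> \<beta>" using ord_eta_le[of f \<beta> \<omega> \<eta>, OF fb] m by simp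
    have le2: "ord_w \<omega> (f \<beta>) \<le> ereal (wdot \<omega> \<alpha>)" by (rule ord_w_le[of "f \<beta>" \<alpha> \<omega>, OF nz])
    have "ord_w \<omega> (f \<beta>) + ereal r = ereal (wdot \<omega> \<alpha>) + ereal r"
      using le1 le2 eq r by (metis add_right_mono antisym)
    then have "ord_w \<omega> (f \<beta>) = ereal (wdot \<omega> \<alpha>)" using ereal_add_cancel_right[of "ereal r" "ord_w \<omega> (f \<beta>)" "ereal (wdot \<omega> \<alpha>)"] by simp
    then show "f \<beta> \<noteq> (\<lambda>_. 0) \<and> ord_w \<omega> (f \<beta>) + edot \<eta> \<beta> = ?m \<and> ereal (wdot \<omega> \<alpha>) = ord_w \<omega> (f \<beta>)"
      using fb eq by simp
  qed
  show "in_eta \<omega> \<eta> f \<beta> \<alpha> = in_weta \<omega> \<eta> f \<beta> \<alpha>"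
  proof (cases "f \<beta> \<alpha> = 0")
    case True
    then show ?thesis by (simp add: in_eta_def in_w_def in_weta_def)
  next
    case False
    show ?thesis using iff[OF False] mlt False m unfolding in_eta_def in_w_def in_weta_def
      by (auto split: if_splits)
  qed
qed



lemma rat_denom: "\<exists>d::nat. d > 0 \<and> of_nat d * (x::rat) \<in> \<int>"
proof -
  obtain a b where ab: "quotient_of x = (a, b)" by (cases "quotient_of x")
  then have b: "b > 0" by (rule quotient_of_denom_pos)
  have x: "x = of_int a / of_int b" using quotient_of_div[OF ab] .
  have "of_nat (nat b) * x = of_int a" using b x by simp
  then show ?thesis using b by (intro exI[of _ "nat b"]) auto
qed

lemma common_denom: "finite S \<Longrightarrow> \<exists>d::nat. d > 0 \<and> (\<forall>i\<in>S. of_nat d * (q i::rat) \<in> \<int>)"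
proof (induction S rule: finite_induct)
  case empty
  then show ?case by (intro exI[of _ 1]) auto
next
  case (insert x F)
  then obtain d where d: "d > 0" "\<forall>i\<in>F. of_nat d * q i \<in> \<int>" by blast
  obtain e where e: "e > 0" "of_nat e * q x \<in> \<int>" using rat_denom by blast
  have "\<forall>i\<in>insert x F. of_nat (d * e) * q i \<in> \<int>"
  proof
    fix i assume "i \<in> insert x F"
    then consider "i = x" | "i \<in> F" by auto
    then show "of_nat (d * e) * q i \<in> \<int>"
    proof cases
      case 1
      have "of_nat (d * e) * q i = of_nat d * (of_nat e * q x)" using 1 by simp
      then show ?thesis using e by (metis Ints_mult Ints_of_nat)
    next
      case 2
      have "of_nat (d * e) * q i = of_nat e * (of_nat d * q i)" by simp
      then show ?thesis using d 2 by (metis Ints_mult Ints_of_nat)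
    qed
  qed
  then show ?case using d e by (intro exI[of _ "d * e"]) auto
qed

lemma puiseux_zero: "puiseux \<omega> (\<lambda>_. 0)"
  unfolding puiseux_def by (auto intro: exI[of _ 1] exI[of _ "{}"] simp: rat_cone_def wdot_def)

lemma puiseux_smul: "puiseux \<omega> \<phi> \<Longrightarrow> puiseux \<omega> (\<lambda>\<alpha>. (c::'k::comm_ring_1) * \<phi> \<alpha>)"
  unfolding puiseux_def by (metis mult_zero_right)

lemma puiseux_translate:
  fixes \<omega> :: "'n::finite \<Rightarrow> real"
  assumes "puiseux \<omega> \<phi>"
  shows "puiseux \<omega> (\<lambda>\<alpha>. \<phi> (\<alpha> - ta))"
proof -
  obtain k where k: "k > 0" "\<forall>\<alpha>. \<phi> \<alpha> \<noteq> 0 \<longrightarrow> (\<forall>i. of_nat k * \<alpha> i \<in> \<int>)"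
    using assms unfolding puiseux_def by blast
  obtain \<gamma> V where gV: "finite V" "\<forall>v\<in>rat_cone V. wdot \<omega> v \<ge> 0" "\<forall>\<alpha>. \<phi> \<alpha> \<noteq> 0 \<longrightarrow> (\<lambda>i. \<alpha> i + \<gamma> i) \<in> rat_cone V"
    using assms unfolding puiseux_def by blast
  obtain d where d: "d > 0" "\<forall>i\<in>UNIV. of_nat d * ta i \<in> \<int>" using common_denom[of "UNIV::'n set" ta] by auto
  have 1: "\<forall>\<alpha>. \<phi> (\<alpha> - ta) \<noteq> 0 \<longrightarrow> (\<forall>i. of_nat (k * d) * \<alpha> i \<in> \<int>)"
  proof (intro allI impI)
    fix \<alpha> i assume "\<phi> (\<alpha> - ta) \<noteq> 0"
    then have "of_nat k * (\<alpha> - ta) i \<in> \<int>" using k by blast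
    then have a: "of_nat k * (\<alpha> i - ta i) \<in> \<int>" by simp
    have "of_nat (k * d) * \<alpha> i = of_nat d * (of_nat k * (\<alpha> i - ta i)) + of_nat k * (of_nat d * ta i)"
      by (simp add: algebra_simps)
    then show "of_nat (k * d) * \<alpha> i \<in> \<int>" using a d(2) by (metis Ints_add Ints_mult Ints_of_nat UNIV_I)
  qed
  have 2: "\<forall>\<alpha>. \<phi> (\<alpha> - ta) \<noteq> 0 \<longrightarrow> (\<lambda>i. \<alpha> i + (\<gamma> i - ta i)) \<in> rat_cone V"
  proof (intro allI impI)
    fix \<alpha> assume "\<phi> (\<alpha> - ta) \<noteq> 0"
    then have "(\<lambda>i. (\<alpha> - ta) i + \<gamma> i) \<in> rat_cone V" using gV(3) by blast
    moreover have "(\<lambda>i. (\<alpha> - ta) i + \<gamma> i) = (\<lambda>i. \<alpha> i + (\<gamma> i - ta i))" by (auto simp: algebra_simps)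
    ultimately show "(\<lambda>i. \<alpha> i + (\<gamma> i - ta i)) \<in> rat_cone V" by simp
  qed
  show ?thesis unfolding puiseux_def using 1 2 k(1) d(1) gV(1,2) by (metis nat_0_less_mult_iff)
qed

lemma spoly_shift:
  fixes \<omega> :: "'n::finite \<Rightarrow> real"
  assumes "spoly \<omega> f"
  shows "spoly \<omega> (shift tb ta f)"
proof -
  have "{\<beta>. shift tb ta f \<beta> \<noteq> (\<lambda>_. 0)} \<subseteq> (\<lambda>b. b + tb) ` {\<beta>. f \<beta> \<noteq> (\<lambda>_. 0)}"
  proof
    fix \<beta> assume "\<beta> \<in> {\<beta>. shift tb ta f \<beta> \<noteq> (\<lambda>_. 0)}"
    then have t: "tb \<le> \<beta>" "f (\<beta> - tb) \<noteq> (\<lambda>_. 0)" by (auto simp: shift_def fun_eq_iff split: if_splits)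
    then show "\<beta> \<in> (\<lambda>b. b + tb) ` {\<beta>. f \<beta> \<noteq> (\<lambda>_. 0)}"
      by (intro image_eqI[of _ _ "\<beta> - tb"]) (auto simp: fun_eq_iff le_fun_def)
  qed
  then have fin: "finite {\<beta>. shift tb ta f \<beta> \<noteq> (\<lambda>_. 0)}"
    using assms unfolding spoly_def by (meson finite_imageI finite_subset)
  have "puiseux \<omega> (shift tb ta f \<beta>)" for \<beta>
  proof (cases "tb \<le> \<beta>")
    case True
    have "shift tb ta f \<beta> = (\<lambda>\<alpha>. f (\<beta> - tb) (\<alpha> - ta))" using True by (simp add: shift_def)
    then show ?thesis using assms puiseux_translate unfolding spoly_def by metis
  next
    case False
    then have "shift tb ta f \<beta> = (\<lambda>_. 0)" by (simp add: shift_def fun_eq_iff)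
    then show ?thesis by (simp add: puiseux_zero)
  qed
  then show ?thesis using fin unfolding spoly_def by blast
qed

lemma spoly_smul:
  assumes "spoly \<omega> f"
  shows "spoly \<omega> (smul (c::'k::comm_ring_1) f)"
proof -
  have "{\<beta>. smul c f \<beta> \<noteq> (\<lambda>_. 0)} \<subseteq> {\<beta>. f \<beta> \<noteq> (\<lambda>_. 0)}" by (force simp: smul_def fun_eq_iff)
  moreover have "puiseux \<omega> (smul c f \<beta>)" for \<beta>
    using assms puiseux_smul[of \<omega> "f \<beta>" c] unfolding spoly_def smul_def by blast
  ultimately show ?thesis using assms unfolding spoly_def by (meson finite_subset)
qed

lemma spoly_one: "spoly (\<omega>::'n::finite \<Rightarrow> real) (mon 0 0 (1::'k::comm_ring_1) :: ('m \<Rightarrow> nat) \<Rightarrow> ('n \<Rightarrow> rat) \<Rightarrow> 'k)"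
proof -
  have "{\<beta>. (mon 0 0 (1::'k) :: ('m \<Rightarrow> nat) \<Rightarrow> ('n \<Rightarrow> rat) \<Rightarrow> 'k) \<beta> \<noteq> (\<lambda>_. 0)} \<subseteq> {0}" by (auto simp: mon_def fun_eq_iff)
  then have fin: "finite {\<beta>. (mon 0 0 (1::'k) :: ('m \<Rightarrow> nat) \<Rightarrow> ('n \<Rightarrow> rat) \<Rightarrow> 'k) \<beta> \<noteq> (\<lambda>_. 0)}" using finite_subset by blast
  have rc: "rat_cone {} = {\<lambda>i::'n. 0::rat}" by (auto simp: rat_cone_def)
  have "puiseux \<omega> ((mon 0 0 (1::'k) :: ('m \<Rightarrow> nat) \<Rightarrow> ('n \<Rightarrow> rat) \<Rightarrow> 'k) \<beta>)" for \<beta>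
    unfolding puiseux_def
  proof (intro conjI)
    show "\<exists>k::nat. 0 < k \<and> (\<forall>\<alpha>. mon 0 0 (1::'k) \<beta> \<alpha> \<noteq> 0 \<longrightarrow> (\<forall>i. of_nat k * \<alpha> i \<in> \<int>))"
      by (rule exI[of _ 1]) (auto simp: mon_def)
    show "\<exists>\<gamma> V. finite V \<and> (\<forall>v\<in>rat_cone V. 0 \<le> wdot \<omega> v) \<and> (\<forall>\<alpha>. mon 0 0 (1::'k) \<beta> \<alpha> \<noteq> 0 \<longrightarrow> (\<lambda>i. \<alpha> i + \<gamma> i) \<in> rat_cone V)"
      by (rule exI[of _ "\<lambda>_. 0"], rule exI[of _ "{}"]) (auto simp: rc mon_def wdot_def)
  qed
  then show ?thesis using fin unfolding spoly_def by blast
qed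

lemma laurent_fsp: "laurent f \<Longrightarrow> fsp f"
  unfolding laurent_def fsp_def supp_def by blast

lemma laurent_one: "laurent (mon 0 0 (1::'k::comm_ring_1))"
proof -
  have "{(\<beta>, \<alpha>). mon 0 0 (1::'k) \<beta> \<alpha> \<noteq> 0} \<subseteq> {(0,0)}" by (auto simp: mon_def)
  then show ?thesis unfolding laurent_def by (auto simp: mon_def intro: finite_subset)
qed

lemma fsp_in_weta: "fsp f \<Longrightarrow> fsp (in_weta \<omega> \<eta> f)"
proof -
  assume "fsp f"
  moreover have "supp (in_weta \<omega> \<eta> f) \<subseteq> supp f" by (auto simp: supp_def in_weta_def split: if_splits)
  ultimately show ?thesis unfolding fsp_def using finite_subset by blast
qed

lemma fsp_yvar: "fsp (yvar i :: ('m \<Rightarrow> nat) \<Rightarrow> ('n \<Rightarrow> rat) \<Rightarrow> 'k::comm_ring_1)"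
proof -
  have "supp (yvar i :: ('m \<Rightarrow> nat) \<Rightarrow> ('n \<Rightarrow> rat) \<Rightarrow> 'k) \<subseteq> {((\<lambda>j. if j = i then 1 else 0), (\<lambda>_. 0))}"
    by (auto simp: supp_def yvar_def split: if_splits)
  then show ?thesis unfolding fsp_def using finite_subset by blast
qed

lemma mon_decomp:
  fixes l :: "('m \<Rightarrow> nat) \<Rightarrow> ('n \<Rightarrow> rat) \<Rightarrow> 'k::comm_ring_1"
  assumes "fsp l"
  shows "l = (\<Sum>p\<in>supp l. mon (fst p) (snd p) (l (fst p) (snd p)))"
proof (intro ext)
  fix \<beta> \<alpha>
  have fin: "finite (supp l)" using assms by (simp add: fsp_def)
  have "(\<Sum>p\<in>supp l. mon (fst p) (snd p) (l (fst p) (snd p))) \<beta> \<alpha>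
      = (\<Sum>p\<in>supp l. if p = (\<beta>, \<alpha>) then l (fst p) (snd p) else 0)"
    by (simp add: sum_fun_apply mon_def) (intro sum.cong, auto)
  also have "\<dots> = l \<beta> \<alpha>" by (subst sum.delta[OF fin]) (auto simp: supp_def)
  finally show "l \<beta> \<alpha> = (\<Sum>p\<in>supp l. mon (fst p) (snd p) (l (fst p) (snd p))) \<beta> \<alpha>" by simp
qed

lemma ext_ideal_contains:
  fixes \<omega> :: "'n::finite \<Rightarrow> real"
  assumes "laurent_ideal I" "f \<in> I"
  shows "f \<in> ext_ideal \<omega> I"
proof -
  have "fsp f" using assms laurent_fsp unfolding laurent_ideal_def by blast
  then have "pmult (mon 0 0 1) f = f" by (rule pmult_one)
  moreover have "pmult (mon 0 0 1) f \<in> ext_ideal \<omega> I"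
    unfolding ext_ideal_def by (rule gen_ideal_single[where C="spoly \<omega>" and G=I, OF spoly_one[of \<omega>] assms(2)])
  ultimately show ?thesis by simp
qed

definition Gens where "Gens \<omega> \<eta> I = {in_weta \<omega> \<eta> f | f. f \<in> I} \<union> {yvar i | i. \<eta> i = \<infinity>}"

lemma In_weta_Gens: "In_weta \<omega> \<eta> I = gen_ideal laurent (Gens \<omega> \<eta> I)"
  by (simp add: In_weta_def Gens_def)

lemma sub1_a:
  fixes \<omega> :: "'n::finite \<Rightarrow> real" and \<eta> :: "'m::finite \<Rightarrow> ereal"
    and I :: "(('m \<Rightarrow> nat) \<Rightarrow> ('n \<Rightarrow> rat) \<Rightarrow> 'k::comm_ring_1) set"
  assumes eta: "\<forall>i. \<eta> i \<noteq> -\<infinity>" and I: "laurent_ideal I" and psi: "spoly \<omega> \<psi>" and k: "k \<in> Gens \<omega> \<eta> I"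
  shows "pmult \<psi> k \<in> In_eta \<omega> \<eta> (ext_ideal \<omega> I)"
proof -
  from k consider f where "f \<in> I" "k = in_weta \<omega> \<eta> f" | i where "\<eta> i = \<infinity>" "k = yvar i"
    unfolding Gens_def by blast
  then show ?thesis
  proof cases
    case 1
    show ?thesis
    proof (cases "ord_weta \<omega> \<eta> f < \<infinity>")
      case True
      then have o: "ord_eta \<omega> \<eta> f < \<infinity>" using ord_eta_eq[OF eta, of \<omega> f] by (simp only:)
      have "k = in_eta \<omega> \<eta> f" using in_eta_eq[OF eta o] 1 by simp
      moreover have "f \<in> ext_ideal \<omega> I" by (rule ext_ideal_contains[OF I 1(1)])
      ultimately have "k \<in> {in_eta \<omega> \<eta> f | f. f \<in> ext_ideal \<omega> I \<and> ord_eta \<omega> \<eta> f < \<infinity>}" using o by blast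
      then show ?thesis unfolding In_eta_def by (intro gen_ideal_single[where C="spoly \<omega>", OF psi]) blast
    next
      case False
      then have "k = 0" using 1 by (auto simp: in_weta_def fun_eq_iff)
      then show ?thesis unfolding In_eta_def by (simp add: pmult_zero_right gen_ideal_0)
    qed
  next
    case 2
    then show ?thesis unfolding In_eta_def by (intro gen_ideal_single[where C="spoly \<omega>", OF psi]) blast
  qed
qed

lemma gens_fsp:
  assumes I: "laurent_ideal I" and k: "k \<in> Gens \<omega> \<eta> I" shows "fsp k"
proof -
  from k consider f where "f \<in> I" "k = in_weta \<omega> \<eta> f" | i where "k = yvar i"
    unfolding Gens_def by blast
  then show ?thesis
  proof cases
    case 1
    then have "laurent f" using I unfolding laurent_ideal_def by blast
    then show ?thesis using 1 by (simp add: fsp_in_weta laurent_fsp)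
  next
    case 2 then show ?thesis by (simp add: fsp_yvar)
  qed
qed

lemma sub1_b:
  fixes \<omega> :: "'n::finite \<Rightarrow> real" and \<eta> :: "'m::finite \<Rightarrow> ereal"
    and I :: "(('m \<Rightarrow> nat) \<Rightarrow> ('n \<Rightarrow> rat) \<Rightarrow> 'k::comm_ring_1) set"
  assumes eta: "\<forall>i. \<eta> i \<noteq> -\<infinity>" and I: "laurent_ideal I" and psi: "spoly \<omega> \<psi>"
    and l: "laurent l" and k: "k \<in> Gens \<omega> \<eta> I"
  shows "pmult \<psi> (pmult l k) \<in> In_eta \<omega> \<eta> (ext_ideal \<omega> I)"
proof -
  have fl: "fsp l" using l by (rule laurent_fsp)
  have fk: "fsp k" using gens_fsp[OF I k] .
  have finl: "finite (supp l)" using fl by (simp add: fsp_def)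
  let ?c = "\<lambda>p. l (fst p) (snd p)"
  have "pmult l k = pmult (\<Sum>p\<in>supp l. mon (fst p) (snd p) (?c p)) k"
    using mon_decomp[OF fl] by simp
  also have "\<dots> = (\<Sum>p\<in>supp l. pmult (mon (fst p) (snd p) (?c p)) k)"
    by (rule pmult_sum_left[OF fk finl])
  also have "\<dots> = (\<Sum>p\<in>supp l. smul (?c p) (shift (fst p) (snd p) k))"
    by (intro sum.cong refl pmult_mon[OF fk])
  finally have e1: "pmult l k = (\<Sum>p\<in>supp l. smul (?c p) (shift (fst p) (snd p) k))" .
  have "pmult \<psi> (pmult l k) = (\<Sum>p\<in>supp l. pmult \<psi> (smul (?c p) (shift (fst p) (snd p) k)))"
    unfolding e1 by (intro pmult_sum_right finl fsp_smul fsp_shift fk)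
  also have "\<dots> = (\<Sum>p\<in>supp l. pmult (shift (fst p) (snd p) (smul (?c p) \<psi>)) k)"
  proof (intro sum.cong refl)
    fix p
    have "pmult \<psi> (smul (?c p) (shift (fst p) (snd p) k)) = pmult (smul (?c p) \<psi>) (shift (fst p) (snd p) k)"
      by (rule pmult_smul_right[OF fsp_shift[OF fk]])
    also have "\<dots> = shift (fst p) (snd p) (pmult (smul (?c p) \<psi>) k)"
      by (rule pmult_shift_right[OF fk])
    also have "\<dots> = pmult (shift (fst p) (snd p) (smul (?c p) \<psi>)) k"
      by (rule pmult_shift_left[OF fk, symmetric])
    finally show "pmult \<psi> (smul (?c p) (shift (fst p) (snd p) k)) = pmult (shift (fst p) (snd p) (smul (?c p) \<psi>)) k" .
  qed
  finally have e2: "pmult \<psi> (pmult l k) = (\<Sum>p\<in>supp l. pmult (shift (fst p) (snd p) (smul (?c p) \<psi>)) k)" .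
  have "(\<Sum>p\<in>supp l. pmult (shift (fst p) (snd p) (smul (?c p) \<psi>)) k) \<in> In_eta \<omega> \<eta> (ext_ideal \<omega> I)"
    unfolding In_eta_def
  proof (rule gen_ideal_sum[OF finl])
    fix p
    have "spoly \<omega> (shift (fst p) (snd p) (smul (?c p) \<psi>))" by (intro spoly_shift spoly_smul psi)
    from sub1_a[OF eta I this k] show "pmult (shift (fst p) (snd p) (smul (?c p) \<psi>)) k \<in> gen_ideal (spoly \<omega>)
         ({in_eta \<omega> \<eta> f |f. f \<in> ext_ideal \<omega> I \<and> ord_eta \<omega> \<eta> f < \<infinity>} \<union> {yvar i |i. \<eta> i = \<infinity>})"
      unfolding In_eta_def .
  qed
  then show ?thesis unfolding e2 .
qed

lemma sub1:
  fixes \<omega> :: "'n::finite \<Rightarrow> real" and \<eta> :: "'m::finite \<Rightarrow> ereal"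
    and I :: "(('m \<Rightarrow> nat) \<Rightarrow> ('n \<Rightarrow> rat) \<Rightarrow> 'k::comm_ring_1) set"
  assumes eta: "\<forall>i. \<eta> i \<noteq> -\<infinity>" and I: "laurent_ideal I"
  shows "ext_ideal \<omega> (In_weta \<omega> \<eta> I) \<subseteq> In_eta \<omega> \<eta> (ext_ideal \<omega> I)"
proof
  have c: "pmult \<psi> h \<in> In_eta \<omega> \<eta> (ext_ideal \<omega> I)" if psi: "spoly \<omega> \<psi>" and hI: "h \<in> In_weta \<omega> \<eta> I" for \<psi> h
  proof -
    obtain n :: nat and l k where h: "h = (\<Sum>i<n. pmult (l i) (k i))" "\<forall>i<n. laurent (l i) \<and> k i \<in> Gens \<omega> \<eta> I"
      using hI unfolding In_weta_Gens by (rule gen_ideal_elims)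
    have fs: "fsp (pmult (l i) (k i))" if "i \<in> {..<n}" for i
    proof -
      have "laurent (l i)" "k i \<in> Gens \<omega> \<eta> I" using that h(2) by auto
      then show ?thesis by (intro fsp_pmult laurent_fsp gens_fsp[OF I])
    qed
    have "pmult \<psi> h = (\<Sum>i<n. pmult \<psi> (pmult (l i) (k i)))"
      unfolding h(1) by (rule pmult_sum_right[OF finite_lessThan fs])
    also have "\<dots> \<in> In_eta \<omega> \<eta> (ext_ideal \<omega> I)" unfolding In_eta_def
    proof (rule gen_ideal_sum[OF finite_lessThan])
      fix i assume "i \<in> {..<n}"
      then have "laurent (l i)" "k i \<in> Gens \<omega> \<eta> I" using h(2) by auto
      from sub1_b[OF eta I psi this] show "pmult \<psi> (pmult (l i) (k i)) \<in> gen_ideal (spoly \<omega>)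
         ({in_eta \<omega> \<eta> f |f. f \<in> ext_ideal \<omega> I \<and> ord_eta \<omega> \<eta> f < \<infinity>} \<union> {yvar i |i. \<eta> i = \<infinity>})"
        unfolding In_eta_def .
    qed
    finally show ?thesis .
  qed
  fix x assume "x \<in> ext_ideal \<omega> (In_weta \<omega> \<eta> I)"
  then obtain n :: nat and \<psi> h where x: "x = (\<Sum>i<n. pmult (\<psi> i) (h i))" "\<forall>i<n. spoly \<omega> (\<psi> i) \<and> h i \<in> In_weta \<omega> \<eta> I"
    unfolding ext_ideal_def by (rule gen_ideal_elims)
  show "x \<in> In_eta \<omega> \<eta> (ext_ideal \<omega> I)" unfolding x(1) In_eta_def
  proof (rule gen_ideal_sum[OF finite_lessThan])
    fix i assume "i \<in> {..<n}"
    then have "spoly \<omega> (\<psi> i)" "h i \<in> In_weta \<omega> \<eta> I" using x(2) by auto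
    from c[OF this] show "pmult (\<psi> i) (h i) \<in> gen_ideal (spoly \<omega>)
         ({in_eta \<omega> \<eta> f |f. f \<in> ext_ideal \<omega> I \<and> ord_eta \<omega> \<eta> f < \<infinity>} \<union> {yvar i |i. \<eta> i = \<infinity>})"
      unfolding In_eta_def .
  qed
qed



lemma wdot_add: "wdot \<omega> (a + b) = wdot \<omega> a + wdot \<omega> b"
  by (simp add: wdot_def of_rat_add distrib_left sum.distrib)

lemma wdot_diff: "wdot \<omega> (a - b) = wdot \<omega> a - wdot \<omega> b"
  by (simp add: wdot_def of_rat_diff right_diff_distrib sum_subtractf)

lemma wdot_lin:
  "wdot \<omega> (\<lambda>i. \<Sum>w\<in>V. t w * w i) = (\<Sum>w\<in>V. real_of_rat (t w) * wdot \<omega> w)"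
proof -
  have "wdot \<omega> (\<lambda>i. \<Sum>w\<in>V. t w * w i) = (\<Sum>i\<in>UNIV. \<Sum>w\<in>V. real_of_rat (t w) * (\<omega> i * real_of_rat (w i)))"
    unfolding wdot_def by (simp add: of_rat_sum of_rat_mult sum_distrib_left mult_ac)
  also have "\<dots> = (\<Sum>w\<in>V. \<Sum>i\<in>UNIV. real_of_rat (t w) * (\<omega> i * real_of_rat (w i)))"
    by (rule sum.swap)
  also have "\<dots> = (\<Sum>w\<in>V. real_of_rat (t w) * wdot \<omega> w)"
    unfolding wdot_def by (simp add: sum_distrib_left)
  finally show ?thesis .
qed

lemma lattice_box_finite:
  assumes "k > 0"
  shows "finite {\<alpha> :: 'n::finite \<Rightarrow> rat. (\<forall>i. of_nat k * \<alpha> i \<in> \<int>) \<and> (\<forall>i. \<bar>real_of_rat (\<alpha> i)\<bar> \<le> E)}"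
proof -
  define K where "K = \<lceil>real k * E\<rceil>"
  let ?Z = "{z :: 'n \<Rightarrow> int. \<forall>i. (i \<in> UNIV \<longrightarrow> z i \<in> {-K..K}) \<and> (i \<notin> UNIV \<longrightarrow> z i = 0)}"
  have finZ: "finite ?Z" by (rule finite_set_of_finite_funs) auto
  have "{\<alpha> :: 'n \<Rightarrow> rat. (\<forall>i. of_nat k * \<alpha> i \<in> \<int>) \<and> (\<forall>i. \<bar>real_of_rat (\<alpha> i)\<bar> \<le> E)}
      \<subseteq> (\<lambda>z i. of_int (z i) / of_nat k) ` ?Z"
  proof
    fix \<alpha> :: "'n \<Rightarrow> rat" assume a: "\<alpha> \<in> {\<alpha>. (\<forall>i. of_nat k * \<alpha> i \<in> \<int>) \<and> (\<forall>i. \<bar>real_of_rat (\<alpha> i)\<bar> \<le> E)}"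
    have "\<forall>i. \<exists>z. of_nat k * \<alpha> i = of_int z" using a by (auto elim!: Ints_cases)
    then obtain z where z: "\<And>i. of_nat k * \<alpha> i = of_int (z i)" by metis
    have "z i \<in> {-K..K}" for i
    proof -
      have "real_of_int (z i) = real k * real_of_rat (\<alpha> i)"
        using arg_cong[OF z[of i], of real_of_rat] by (simp add: of_rat_mult)
      moreover have "\<bar>real k * real_of_rat (\<alpha> i)\<bar> \<le> real k * E"
        using a by (simp add: abs_mult mult_left_mono)
      ultimately have "\<bar>real_of_int (z i)\<bar> \<le> real k * E" by simp
      then have "\<bar>real_of_int (z i)\<bar> \<le> real_of_int K" unfolding K_def by (meson le_ceiling_iff order_trans le_of_int_ceiling)
      then show ?thesis by (simp add: abs_le_iff)
    qed
    then have "z \<in> ?Z" by auto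
    moreover have "\<alpha> = (\<lambda>i. of_int (z i) / of_nat k)"
      using z assms by (auto simp: fun_eq_iff field_simps)
    ultimately show "\<alpha> \<in> (\<lambda>z i. of_int (z i) / of_nat k) ` ?Z" by blast
  qed
  then show ?thesis using finZ finite_subset by blast
qed

lemma in_rat_cone_gen:
  assumes "w \<in> V" "finite V" shows "w \<in> rat_cone V"
proof -
  have "(\<Sum>v\<in>V. (if v = w then 1 else 0) * v i) = w i" for i
  proof -
    have "(\<Sum>v\<in>V. (if v = w then 1 else 0) * v i) = (\<Sum>v\<in>V. if v = w then w i else 0)"
      by (intro sum.cong) auto
    also have "\<dots> = w i" using assms by simp
    finally show ?thesis .
  qed
  then show ?thesis unfolding rat_cone_def
    by (intro CollectI exI[of _ "\<lambda>v. if v = w then 1 else 0"]) auto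
qed

lemma wdot_pos:
  fixes \<omega> :: "'n::finite \<Rightarrow> real"
  assumes "rat_lin_indep \<omega>" "wdot \<omega> w \<ge> 0" "w \<noteq> (\<lambda>_. 0)"
  shows "wdot \<omega> w > 0"
proof -
  have "wdot \<omega> w \<noteq> 0"
  proof
    assume "wdot \<omega> w = 0"
    then have "(\<Sum>i\<in>UNIV. real_of_rat (w i) * \<omega> i) = 0" unfolding wdot_def by (simp add: mult_ac)
    then show False using assms(1,3) unfolding rat_lin_indep_def by blast
  qed
  then show ?thesis using assms(2) by simp
qed

lemma puiseux_slab_finite:
  fixes \<omega> :: "'n::finite \<Rightarrow> real" and \<phi> :: "('n \<Rightarrow> rat) \<Rightarrow> 'k::zero"
  assumes li: "rat_lin_indep \<omega>" and p: "puiseux \<omega> \<phi>"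
  shows "finite {\<alpha>. \<phi> \<alpha> \<noteq> 0 \<and> wdot \<omega> \<alpha> \<le> D}"
proof -
  obtain k where k: "k > 0" "\<forall>\<alpha>. \<phi> \<alpha> \<noteq> 0 \<longrightarrow> (\<forall>i. of_nat k * \<alpha> i \<in> \<int>)"
    using p unfolding puiseux_def by blast
  obtain \<gamma> V where gV: "finite V" "\<forall>v\<in>rat_cone V. wdot \<omega> v \<ge> 0" "\<forall>\<alpha>. \<phi> \<alpha> \<noteq> 0 \<longrightarrow> (\<lambda>i. \<alpha> i + \<gamma> i) \<in> rat_cone V"
    using p unfolding puiseux_def by blast
  define W where "W = V - {\<lambda>_. 0}"
  have finW: "finite W" using gV(1) by (simp add: W_def)
  have Wpos: "wdot \<omega> w > 0" if "w \<in> W" for w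
    using that gV in_rat_cone_gen wdot_pos[OF li] unfolding W_def by blast
  define c where "c = (if W = {} then 1 else Min (wdot \<omega> ` W))"
  have c: "c > 0" "\<And>w. w \<in> W \<Longrightarrow> c \<le> wdot \<omega> w"
    using finW Wpos unfolding c_def by auto
  define M where "M = (\<Sum>w\<in>V. \<Sum>i\<in>UNIV. \<bar>real_of_rat (w i)\<bar>)"
  have M: "\<bar>real_of_rat (w i)\<bar> \<le> M" if "w \<in> V" for w i
  proof -
    have "\<bar>real_of_rat (w i)\<bar> \<le> (\<Sum>i\<in>UNIV. \<bar>real_of_rat (w i)\<bar>)"
      by (rule member_le_sum) auto
    also have "\<dots> \<le> M" unfolding M_def using that gV(1) by (intro member_le_sum) (auto intro!: sum_nonneg)
    finally show ?thesis .
  qed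
  have M0: "M \<ge> 0" unfolding M_def by (intro sum_nonneg) auto
  define B where "B = (D + wdot \<omega> \<gamma>) / c"
  define E where "E = (\<Sum>i\<in>UNIV. \<bar>real_of_rat (\<gamma> i)\<bar>) + B * M"
  have "{\<alpha>. \<phi> \<alpha> \<noteq> 0 \<and> wdot \<omega> \<alpha> \<le> D} \<subseteq> {\<alpha>. (\<forall>i. of_nat k * \<alpha> i \<in> \<int>) \<and> (\<forall>i. \<bar>real_of_rat (\<alpha> i)\<bar> \<le> E)}"
  proof safe
    fix \<alpha> i assume a: "\<phi> \<alpha> \<noteq> 0" "wdot \<omega> \<alpha> \<le> D"
    show "of_nat k * \<alpha> i \<in> \<int>" using k a by blast
    obtain t where t: "\<forall>w\<in>V. t w \<ge> 0" "(\<lambda>i. \<alpha> i + \<gamma> i) = (\<lambda>i. \<Sum>w\<in>V. t w * w i)"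
      using gV(3) a(1) unfolding rat_cone_def by blast
    have t0: "\<And>w. w \<in> V \<Longrightarrow> real_of_rat (t w) \<ge> 0" using t(1) by simp
    have sV: "(\<Sum>w\<in>V. f w) = (\<Sum>w\<in>W. f w)" if "f (\<lambda>_. 0) = 0" for f :: "('n \<Rightarrow> rat) \<Rightarrow> real"
      unfolding W_def using that gV(1) by (intro sum.mono_neutral_right) auto
    have "wdot \<omega> (\<lambda>i. \<alpha> i + \<gamma> i) = wdot \<omega> \<alpha> + wdot \<omega> \<gamma>"
      using wdot_add[of \<omega> \<alpha> \<gamma>] by (simp add: plus_fun_def)
    also have "\<dots> \<le> D + wdot \<omega> \<gamma>" using a(2) by simp
    finally have up: "wdot \<omega> (\<lambda>i. \<alpha> i + \<gamma> i) \<le> D + wdot \<omega> \<gamma>" .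
    have "wdot \<omega> (\<lambda>i. \<alpha> i + \<gamma> i) = (\<Sum>w\<in>V. real_of_rat (t w) * wdot \<omega> w)"
      unfolding t(2) by (rule wdot_lin)
    also have "\<dots> = (\<Sum>w\<in>W. real_of_rat (t w) * wdot \<omega> w)" by (rule sV) (simp add: wdot_def)
    also have "\<dots> \<ge> (\<Sum>w\<in>W. real_of_rat (t w) * c)"
      using t0 c(2) unfolding W_def by (intro sum_mono mult_left_mono) auto
    finally have "c * (\<Sum>w\<in>W. real_of_rat (t w)) \<le> D + wdot \<omega> \<gamma>"
      using up by (simp add: sum_distrib_left mult_ac)
    then have tB: "(\<Sum>w\<in>W. real_of_rat (t w)) \<le> B" unfolding B_def using c(1) by (simp add: field_simps)
    have "real_of_rat (\<alpha> i + \<gamma> i) = (\<Sum>w\<in>V. real_of_rat (t w) * real_of_rat (w i))"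
      using fun_cong[OF t(2), of i] by (simp add: of_rat_sum of_rat_mult)
    also have "\<dots> = (\<Sum>w\<in>W. real_of_rat (t w) * real_of_rat (w i))" by (rule sV) simp
    finally have "\<bar>real_of_rat (\<alpha> i + \<gamma> i)\<bar> \<le> (\<Sum>w\<in>W. \<bar>real_of_rat (t w) * real_of_rat (w i)\<bar>)"
      by (simp add: sum_abs)
    also have "\<dots> \<le> (\<Sum>w\<in>W. real_of_rat (t w) * M)"
      using t0 M unfolding W_def by (intro sum_mono) (auto simp: abs_mult intro: mult_left_mono)
    also have "\<dots> = (\<Sum>w\<in>W. real_of_rat (t w)) * M" by (simp add: sum_distrib_right)
    also have "\<dots> \<le> B * M" using tB M0 by (rule mult_right_mono)
    finally have h1: "\<bar>real_of_rat (\<alpha> i + \<gamma> i)\<bar> \<le> B * M" .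
    have h2: "\<bar>real_of_rat (\<gamma> i)\<bar> \<le> (\<Sum>i\<in>UNIV. \<bar>real_of_rat (\<gamma> i)\<bar>)" by (rule member_le_sum) auto
    have "\<bar>real_of_rat (\<alpha> i)\<bar> \<le> \<bar>real_of_rat (\<alpha> i + \<gamma> i)\<bar> + \<bar>real_of_rat (\<gamma> i)\<bar>"
      by (simp only: of_rat_add)
    then show "\<bar>real_of_rat (\<alpha> i)\<bar> \<le> E" unfolding E_def using h1 h2 by linarith
  qed
  then show ?thesis using lattice_box_finite[OF k(1)] finite_subset by blast
qed



lemma edot_alt: "edot \<eta> \<beta> = (\<Sum>i\<in>UNIV. \<eta> i * ereal (real (\<beta> i)))"
  unfolding edot_def by (intro sum.cong) (auto simp: zero_ereal_def[symmetric])

lemma edot_add: "edot \<eta> (b1 + b2) = edot \<eta> b1 + edot \<eta> b2"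
proof -
  have "\<eta> i * ereal (real ((b1 + b2) i)) = \<eta> i * ereal (real (b1 i)) + \<eta> i * ereal (real (b2 i))" for i
    using ereal_right_distrib[of "ereal (real (b1 i))" "ereal (real (b2 i))" "\<eta> i"] by simp
  then show ?thesis unfolding edot_alt by (simp add: sum.distrib)
qed

lemma val_add:
  "val \<omega> \<eta> (b1 + b2) (a1 + a2) = val \<omega> \<eta> b1 a1 + val \<omega> \<eta> b2 a2"
  unfolding val_def by (simp add: edot_add wdot_add ac_simps)

lemma ereal_gt_add:
  fixes x y :: ereal
  assumes "ereal C < x" "ereal L \<le> y" "y \<noteq> -\<infinity>"
  shows "ereal (C + L) < x + y"
  using assms by (cases x; cases y) auto

lemma pmult_val_gt:
  fixes Q f :: "('m::finite \<Rightarrow> nat) \<Rightarrow> ('n::finite \<Rightarrow> rat) \<Rightarrow> 'k::comm_ring_1"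
  assumes eta: "\<forall>i. \<eta> i \<noteq> -\<infinity>" and ff: "fsp f"
    and hQ: "\<And>b a. Q b a \<noteq> 0 \<Longrightarrow> ereal C < val \<omega> \<eta> b a"
    and hf: "\<And>b a. f b a \<noteq> 0 \<Longrightarrow> ereal L \<le> val \<omega> \<eta> b a"
    and nz: "pmult Q f \<beta> \<alpha> \<noteq> 0"
  shows "ereal (C + L) < val \<omega> \<eta> \<beta> \<alpha>"
proof -
  have "(\<Sum>p\<in>{p\<in>supp f. fst p \<le> \<beta>}. Q (\<beta> - fst p) (\<alpha> - snd p) * f (fst p) (snd p)) \<noteq> 0"
    using nz unfolding pmult_fsp[OF ff] .
  then obtain p where p: "p \<in> {p\<in>supp f. fst p \<le> \<beta>}" "Q (\<beta> - fst p) (\<alpha> - snd p) * f (fst p) (snd p) \<noteq> 0"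
    by (rule sum.not_neutral_contains_not_neutral)
  then have q: "Q (\<beta> - fst p) (\<alpha> - snd p) \<noteq> 0" "f (fst p) (snd p) \<noteq> 0" "fst p \<le> \<beta>" by auto
  have "val \<omega> \<eta> \<beta> \<alpha> = val \<omega> \<eta> ((\<beta> - fst p) + fst p) ((\<alpha> - snd p) + snd p)"
    using q(3) by (simp add: nat_fun_facts(9) rat_fun_facts(4))
  also have "\<dots> = val \<omega> \<eta> (\<beta> - fst p) (\<alpha> - snd p) + val \<omega> \<eta> (fst p) (snd p)" by (rule val_add)
  finally have v: "val \<omega> \<eta> \<beta> \<alpha> = val \<omega> \<eta> (\<beta> - fst p) (\<alpha> - snd p) + val \<omega> \<eta> (fst p) (snd p)" .
  show ?thesis unfolding v
    by (rule ereal_gt_add[OF hQ[OF q(1)] hf[OF q(2)] val_nminf[OF eta]])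
qed

definition trunc_le where "trunc_le \<omega> \<eta> C \<phi> = (\<lambda>\<beta> \<alpha>. if val \<omega> \<eta> \<beta> \<alpha> \<le> ereal C then \<phi> \<beta> \<alpha> else 0)"
definition trunc_gt where "trunc_gt \<omega> \<eta> C \<phi> = (\<lambda>\<beta> \<alpha>. if val \<omega> \<eta> \<beta> \<alpha> \<le> ereal C then 0 else \<phi> \<beta> \<alpha>)"

lemma trunc_split: "(\<phi> :: ('m::finite \<Rightarrow> nat) \<Rightarrow> ('n::finite \<Rightarrow> rat) \<Rightarrow> 'k::comm_ring_1) = trunc_le \<omega> \<eta> C \<phi> + trunc_gt \<omega> \<eta> C \<phi>"
  by (auto simp: fun_eq_iff trunc_le_def trunc_gt_def)

lemma trunc_gt_val: "trunc_gt \<omega> \<eta> C \<phi> b a \<noteq> 0 \<Longrightarrow> ereal C < val \<omega> \<eta> b a"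
  by (auto simp: trunc_gt_def split: if_splits)

lemma trunc_le_fsp:
  fixes \<omega> :: "'n::finite \<Rightarrow> real" and \<eta> :: "'m::finite \<Rightarrow> ereal"
    and \<phi> :: "('m \<Rightarrow> nat) \<Rightarrow> ('n \<Rightarrow> rat) \<Rightarrow> 'k::comm_ring_1"
  assumes li: "rat_lin_indep \<omega>" and eta: "\<forall>i. \<eta> i \<noteq> -\<infinity>" and sp: "spoly \<omega> \<phi>"
  shows "fsp (trunc_le \<omega> \<eta> C \<phi>)"
proof -
  let ?B = "{\<beta>. \<phi> \<beta> \<noteq> (\<lambda>_. 0)}"
  let ?A = "\<lambda>\<beta>. {\<alpha>. \<phi> \<beta> \<alpha> \<noteq> 0 \<and> wdot \<omega> \<alpha> \<le> C - real_of_ereal (edot \<eta> \<beta>)}"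
  have "supp (trunc_le \<omega> \<eta> C \<phi>) \<subseteq> Sigma ?B ?A"
  proof
    fix x assume "x \<in> supp (trunc_le \<omega> \<eta> C \<phi>)"
    then obtain \<beta> \<alpha> where x: "x = (\<beta>, \<alpha>)" "\<phi> \<beta> \<alpha> \<noteq> 0" "val \<omega> \<eta> \<beta> \<alpha> \<le> ereal C"
      by (auto simp: supp_def trunc_le_def split: if_splits)
    have "edot \<eta> \<beta> \<noteq> \<infinity>" using x(3) unfolding val_def by auto
    moreover have "edot \<eta> \<beta> \<noteq> -\<infinity>" by (rule edot_nminf[OF eta])
    ultimately obtain r where r: "edot \<eta> \<beta> = ereal r" by (cases "edot \<eta> \<beta>") auto
    have "wdot \<omega> \<alpha> \<le> C - r" using x(3) r unfolding val_def by simp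
    then show "x \<in> Sigma ?B ?A" using x r by auto
  qed
  moreover have "finite (Sigma ?B ?A)"
    using sp puiseux_slab_finite[OF li] unfolding spoly_def by (intro finite_SigmaI) auto
  ultimately show ?thesis unfolding fsp_def using finite_subset by blast
qed

definition rep :: "('n \<Rightarrow> rat) \<Rightarrow> ('n \<Rightarrow> rat)" where
  "rep \<alpha> = (\<lambda>i. \<alpha> i - of_int \<lfloor>\<alpha> i\<rfloor>)"

lemma rep_diff_int: "(\<forall>i. a i \<in> \<int>) \<Longrightarrow> rep (x - a) = rep x"
proof -
  assume a: "\<forall>i. a i \<in> \<int>"
  have "(x - a) i - of_int \<lfloor>(x - a) i\<rfloor> = x i - of_int \<lfloor>x i\<rfloor>" for i
  proof -
    obtain z where z: "a i = of_int z" using a by (auto elim!: Ints_cases)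
    have "\<lfloor>x i - of_int z\<rfloor> = \<lfloor>x i\<rfloor> - z" by (rule floor_diff_of_int)
    then show ?thesis using z by simp
  qed
  then show ?thesis unfolding rep_def by auto
qed

lemma rep_int: "rep (\<alpha> + r) = r \<Longrightarrow> \<alpha> i \<in> \<int>"
proof -
  assume "rep (\<alpha> + r) = r"
  then have "\<alpha> i + r i - of_int \<lfloor>\<alpha> i + r i\<rfloor> = r i" unfolding rep_def by (metis plus_fun_apply)
  then have "\<alpha> i = of_int \<lfloor>\<alpha> i + r i\<rfloor>" by simp
  then show ?thesis by (metis Ints_of_int)
qed

lemma rep_id: "rep (\<alpha> - r + r) = rep \<alpha>" by (simp add: rat_fun_facts(4))

definition clsP :: "('n \<Rightarrow> rat) \<Rightarrow> (('m \<Rightarrow> nat) \<Rightarrow> ('n \<Rightarrow> rat) \<Rightarrow> 'k::zero) \<Rightarrow> ('m \<Rightarrow> nat) \<Rightarrow> ('n \<Rightarrow> rat) \<Rightarrow> 'k" where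
  "clsP r P = (\<lambda>\<beta> \<alpha>. if rep (\<alpha> + r) = r then P \<beta> (\<alpha> + r) else 0)"

lemma laurent_clsP:
  assumes "fsp P"
  shows "laurent (clsP r P)"
proof -
  have "{(\<beta>, \<alpha>). clsP r P \<beta> \<alpha> \<noteq> 0} \<subseteq> (\<lambda>(b,a). (b, a - r)) ` supp P"
  proof
    fix x assume "x \<in> {(\<beta>, \<alpha>). clsP r P \<beta> \<alpha> \<noteq> 0}"
    then obtain \<beta> \<alpha> where x: "x = (\<beta>, \<alpha>)" "P \<beta> (\<alpha> + r) \<noteq> 0" by (auto simp: clsP_def split: if_splits)
    then show "x \<in> (\<lambda>(b,a). (b, a - r)) ` supp P"
      by (intro image_eqI[of _ _ "(\<beta>, \<alpha> + r)"]) (auto simp: supp_def)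
  qed
  moreover have "finite ((\<lambda>(b,a). (b, a - r)) ` supp P)" using assms by (simp add: fsp_def)
  ultimately have "finite {(\<beta>, \<alpha>). clsP r P \<beta> \<alpha> \<noteq> 0}" using finite_subset by blast
  moreover have "\<forall>\<beta> \<alpha>. clsP r P \<beta> \<alpha> \<noteq> 0 \<longrightarrow> (\<forall>i. \<alpha> i \<in> \<int>)"
    using rep_int by (auto simp: clsP_def split: if_splits)
  ultimately show ?thesis unfolding laurent_def by blast
qed

lemma pmult_clsP:
  fixes P f :: "('m \<Rightarrow> nat) \<Rightarrow> ('n \<Rightarrow> rat) \<Rightarrow> 'k::comm_ring_1"
  assumes f: "laurent f"
  shows "pmult (clsP r P) f = clsP r (pmult P f)"
proof (intro ext)
  fix \<beta> \<alpha>
  have ff: "fsp f" using f by (rule laurent_fsp)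
  have int: "\<forall>i. snd p i \<in> \<int>" if "p \<in> supp f" for p
    using that f unfolding laurent_def supp_def by auto
  have e: "clsP r P (\<beta> - fst p) (\<alpha> - snd p) * f (fst p) (snd p) =
      (if rep (\<alpha> + r) = r then P (\<beta> - fst p) (\<alpha> + r - snd p) * f (fst p) (snd p) else 0)"
    if "p \<in> {p\<in>supp f. fst p \<le> \<beta>}" for p
  proof -
    have h: "\<alpha> - snd p + r = \<alpha> + r - snd p" by (simp add: fun_eq_iff)
    have "rep (\<alpha> - snd p + r) = rep (\<alpha> + r - snd p)" by (simp only: h)
    also have "\<dots> = rep (\<alpha> + r)" using int that by (intro rep_diff_int) auto
    finally have "rep (\<alpha> - snd p + r) = rep (\<alpha> + r)" .
    then show ?thesis unfolding clsP_def h by simp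
  qed
  have "pmult (clsP r P) f \<beta> \<alpha> = (\<Sum>p\<in>{p\<in>supp f. fst p \<le> \<beta>}.
      (if rep (\<alpha> + r) = r then P (\<beta> - fst p) (\<alpha> + r - snd p) * f (fst p) (snd p) else 0))"
    unfolding pmult_fsp[OF ff] using e by (rule sum.cong[OF refl])
  also have "\<dots> = clsP r (pmult P f) \<beta> \<alpha>"
    unfolding clsP_def pmult_fsp[OF ff] by simp
  finally show "pmult (clsP r P) f \<beta> \<alpha> = clsP r (pmult P f) \<beta> \<alpha>" .
qed

lemma clsP_sum: "clsP r (\<Sum>i\<in>S. F i) = (\<Sum>i\<in>S. clsP r (F i :: ('m \<Rightarrow> nat) \<Rightarrow> ('n \<Rightarrow> rat) \<Rightarrow> 'k::comm_ring_1))"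
  by (intro ext) (simp add: clsP_def sum_fun_apply)

lemma ideal_sum:
  assumes "laurent_ideal I" "finite S" "\<And>s. s \<in> S \<Longrightarrow> F s \<in> I"
  shows "(\<Sum>s\<in>S. F s) \<in> I"
  using assms(2,3)
proof (induction S rule: finite_induct)
  case empty then show ?case using assms(1) unfolding laurent_ideal_def by (simp only: sum.empty)
next
  case (insert x T)
  then have "F x \<in> I" "sum F T \<in> I" by auto
  then have "F x + sum F T \<in> I" using assms(1) unfolding laurent_ideal_def by blast
  then show ?case using insert by (simp only: sum.insert[OF insert(1,2)])
qed



lemma val_shift_add: "val \<omega> \<eta> \<beta> (a + r) = val \<omega> \<eta> \<beta> a + ereal (wdot \<omega> r)"
  unfolding val_def by (simp add: wdot_add ac_simps)

lemma val_shift_diff: "val \<omega> \<eta> \<beta> (\<alpha> - r) + ereal (wdot \<omega> r) = val \<omega> \<eta> \<beta> \<alpha>"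
  using val_shift_add[of \<omega> \<eta> \<beta> "\<alpha> - r" r] by (simp add: rat_fun_facts(4))

lemma shift0: "shift 0 r H \<beta> \<alpha> = H \<beta> (\<alpha> - r)"
  by (simp add: shift_def)

lemma in_weta_coeff:
  "ord_weta \<omega> \<eta> f < \<infinity> \<Longrightarrow> in_weta \<omega> \<eta> f \<beta> \<alpha> = (if f \<beta> \<alpha> \<noteq> 0 \<and> val \<omega> \<eta> \<beta> \<alpha> = ord_weta \<omega> \<eta> f then f \<beta> \<alpha> else 0)"
  by (simp add: in_weta_def val_def)

lemma in_weta_decomp:
  fixes \<omega> :: "'n::finite \<Rightarrow> real" and \<eta> :: "'m::finite \<Rightarrow> ereal"
    and g G :: "('m \<Rightarrow> nat) \<Rightarrow> ('n \<Rightarrow> rat) \<Rightarrow> 'k::comm_ring_1"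
  assumes eta: "\<forall>i. \<eta> i \<noteq> -\<infinity>" and fG: "fsp G" and m: "ord_weta \<omega> \<eta> g = ereal mr"
    and hR: "\<And>\<beta> \<alpha>. g \<beta> \<alpha> - G \<beta> \<alpha> \<noteq> 0 \<Longrightarrow> ereal mr < val \<omega> \<eta> \<beta> \<alpha>"
  shows "in_weta \<omega> \<eta> g = (\<Sum>r\<in>rep ` snd ` supp G.
      (if ord_weta \<omega> \<eta> (clsP r G) + ereal (wdot \<omega> r) = ereal mr then shift 0 r (in_weta \<omega> \<eta> (clsP r G)) else 0))"
    (is "_ = ?T")
proof (intro ext)
  fix \<beta> :: "'m \<Rightarrow> nat" and \<alpha> :: "'n \<Rightarrow> rat"
  let ?R = "rep ` snd ` supp G"
  let ?F = "\<lambda>r. clsP r G"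
  let ?cond = "\<lambda>r. ord_weta \<omega> \<eta> (?F r) + ereal (wdot \<omega> r) = ereal mr"
  have finR: "finite ?R" using fG by (simp add: fsp_def)
  have hg: "g b a \<noteq> 0 \<Longrightarrow> ereal mr \<le> val \<omega> \<eta> b a" for b a using ord_weta_le[of g b a \<omega> \<eta>] m by simp
  have hG: "G b a \<noteq> 0 \<Longrightarrow> ereal mr \<le> val \<omega> \<eta> b a" for b a
  proof -
    assume "G b a \<noteq> 0"
    show ?thesis
    proof (cases "g b a - G b a = 0")
      case True
      then have "g b a \<noteq> 0" using \<open>G b a \<noteq> 0\<close> by simp
      then show ?thesis by (rule hg)
    next
      case False
      then show ?thesis using hR[of b a] by simp
    qed
  qed
  have Fval: "ereal mr \<le> ord_weta \<omega> \<eta> (?F r) + ereal (wdot \<omega> r)" for r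
  proof -
    have "ereal mr - ereal (wdot \<omega> r) \<le> ord_weta \<omega> \<eta> (?F r)"
    proof (rule ord_weta_ge)
      fix b a assume "clsP r G b a \<noteq> 0"
      then have "G b (a + r) \<noteq> 0" by (simp add: clsP_def split: if_splits)
      then have "ereal mr \<le> val \<omega> \<eta> b a + ereal (wdot \<omega> r)" using hG val_shift_add by metis
      then show "ereal mr - ereal (wdot \<omega> r) \<le> val \<omega> \<eta> b a"
        by (cases "val \<omega> \<eta> b a") auto
    qed
    then show ?thesis by (cases "ord_weta \<omega> \<eta> (?F r)") auto
  qed
  define r0 where "r0 = rep \<alpha>"
  have Fr0: "?F r0 \<beta> (\<alpha> - r0) = G \<beta> \<alpha>" by (simp add: clsP_def rep_id rat_fun_facts(4) r0_def)
  have Fr: "?F r \<beta> (\<alpha> - r) = 0" if "r \<noteq> r0" for r :: "'n \<Rightarrow> rat"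
    using that by (simp add: clsP_def rep_id rat_fun_facts(4) r0_def)
  have inw0: "in_weta \<omega> \<eta> (?F r) \<beta> (\<alpha> - r) = 0" if "r \<noteq> r0" for r :: "'n \<Rightarrow> rat"
    using Fr[OF that] by (simp add: in_weta_def)
  have "?T \<beta> \<alpha> = (\<Sum>r\<in>?R. if ?cond r then in_weta \<omega> \<eta> (?F r) \<beta> (\<alpha> - r) else 0)"
    unfolding sum_fun_apply by (intro sum.cong refl) (simp add: shift0)
  also have "\<dots> = (\<Sum>r\<in>?R. if r = r0 then (if ?cond r then in_weta \<omega> \<eta> (?F r) \<beta> (\<alpha> - r) else 0) else 0)"
    using inw0 by (intro sum.cong) auto
  also have "\<dots> = (if r0 \<in> ?R \<and> ?cond r0 then in_weta \<omega> \<eta> (?F r0) \<beta> (\<alpha> - r0) else 0)"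
    by (subst sum.delta[OF finR]) simp
  finally have T: "?T \<beta> \<alpha> = (if r0 \<in> ?R \<and> ?cond r0 then in_weta \<omega> \<eta> (?F r0) \<beta> (\<alpha> - r0) else 0)" .
  have mlt: "ord_weta \<omega> \<eta> g < \<infinity>" using m by simp
  have vs: "val \<omega> \<eta> \<beta> (\<alpha> - r0) + ereal (wdot \<omega> r0) = val \<omega> \<eta> \<beta> \<alpha>" by (rule val_shift_diff)
  show "in_weta \<omega> \<eta> g \<beta> \<alpha> = ?T \<beta> \<alpha>"
  proof (cases "g \<beta> \<alpha> \<noteq> 0 \<and> val \<omega> \<eta> \<beta> \<alpha> = ereal mr")
    case True
    then have RG: "g \<beta> \<alpha> = G \<beta> \<alpha>" using hR[of \<beta> \<alpha>] by fastforce
    then have Gnz: "G \<beta> \<alpha> \<noteq> 0" using True by simp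
    then have inR: "r0 \<in> ?R" unfolding r0_def by (force simp: supp_def)
    have le: "ord_weta \<omega> \<eta> (?F r0) \<le> val \<omega> \<eta> \<beta> (\<alpha> - r0)" using ord_weta_le[of "?F r0" \<beta> "\<alpha> - r0" \<omega> \<eta>] Fr0 Gnz by simp
    then have "ord_weta \<omega> \<eta> (?F r0) + ereal (wdot \<omega> r0) \<le> ereal mr" using vs True by (metis add_right_mono)
    then have c: "?cond r0" using Fval[of r0] by (rule antisym)
    have vfin: "val \<omega> \<eta> \<beta> (\<alpha> - r0) = ereal (mr - wdot \<omega> r0)"
      using vs True by (cases "val \<omega> \<eta> \<beta> (\<alpha> - r0)") auto
    have ofin: "ord_weta \<omega> \<eta> (?F r0) = ereal (mr - wdot \<omega> r0)"
      using c by (cases "ord_weta \<omega> \<eta> (?F r0)") auto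
    have "in_weta \<omega> \<eta> (?F r0) \<beta> (\<alpha> - r0) = G \<beta> \<alpha>"
      using ofin vfin Fr0 Gnz by (simp add: in_weta_coeff)
    then show ?thesis using T inR c True RG mlt m by (simp add: in_weta_coeff)
  next
    case False
    then have l: "in_weta \<omega> \<eta> g \<beta> \<alpha> = 0" using mlt m by (auto simp: in_weta_coeff)
    have "?T \<beta> \<alpha> = 0"
    proof (rule ccontr)
      assume nz: "?T \<beta> \<alpha> \<noteq> 0"
      then have c: "?cond r0" and inz: "in_weta \<omega> \<eta> (?F r0) \<beta> (\<alpha> - r0) \<noteq> 0" using T by (auto split: if_splits)
      have olt: "ord_weta \<omega> \<eta> (?F r0) < \<infinity>" using inz by (auto simp: in_weta_def split: if_splits)
      then have "G \<beta> \<alpha> \<noteq> 0 \<and> val \<omega> \<eta> \<beta> (\<alpha> - r0) = ord_weta \<omega> \<eta> (?F r0)"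
        using inz Fr0 by (auto simp: in_weta_coeff split: if_splits)
      then have Gnz: "G \<beta> \<alpha> \<noteq> 0" and v: "val \<omega> \<eta> \<beta> \<alpha> = ereal mr" using vs c by auto
      then have "g \<beta> \<alpha> - G \<beta> \<alpha> = 0" using hR[of \<beta> \<alpha>] by auto
      then have "g \<beta> \<alpha> \<noteq> 0" using Gnz by simp
      then show False using False v by simp
    qed
    then show ?thesis using l by simp
  qed
qed



lemma in_Gens_In_weta:
  assumes "k \<in> Gens \<omega> \<eta> I" "fsp k"
  shows "k \<in> In_weta \<omega> \<eta> I"
proof -
  have "pmult (mon 0 0 1) k \<in> In_weta \<omega> \<eta> I" unfolding In_weta_Gens
    by (rule gen_ideal_single[where C=laurent, OF laurent_one assms(1)])
  then show ?thesis using pmult_one[OF assms(2)] by simp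
qed

lemma sub2_gen:
  fixes \<omega> :: "'n::finite \<Rightarrow> real" and \<eta> :: "'m::finite \<Rightarrow> ereal"
    and I :: "(('m \<Rightarrow> nat) \<Rightarrow> ('n \<Rightarrow> rat) \<Rightarrow> 'k::comm_ring_1) set"
  assumes li: "rat_lin_indep \<omega>" and eta: "\<forall>i. \<eta> i \<noteq> -\<infinity>" and I: "laurent_ideal I"
    and gE: "g \<in> ext_ideal \<omega> I" and o: "ord_eta \<omega> \<eta> g < \<infinity>" and psi: "spoly \<omega> \<psi>"
  shows "pmult \<psi> (in_eta \<omega> \<eta> g) \<in> ext_ideal \<omega> (In_weta \<omega> \<eta> I)"
proof -
  have ieq: "in_eta \<omega> \<eta> g = in_weta \<omega> \<eta> g" by (rule in_eta_eq[OF eta o])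
  have mlt: "ord_weta \<omega> \<eta> g < \<infinity>" using o ord_eta_eq[OF eta, of \<omega> g] by simp
  obtain n :: nat and \<phi> f where g: "g = (\<Sum>i<n. pmult (\<phi> i) (f i))" "\<forall>i<n. spoly \<omega> (\<phi> i) \<and> f i \<in> I"
    using gE unfolding ext_ideal_def by (rule gen_ideal_elims)
  have fl: "laurent (f i)" if "i < n" for i using g(2) that I unfolding laurent_ideal_def by blast
  have ff: "fsp (f i)" if "i < n" for i using fl[OF that] by (rule laurent_fsp)
  show ?thesis
  proof (cases "ord_weta \<omega> \<eta> g = -\<infinity>")
    case True
    have "in_weta \<omega> \<eta> g = 0"
      using True val_nminf[OF eta] by (auto simp: fun_eq_iff in_weta_def val_def)
    then show ?thesis unfolding ieq by (simp add: pmult_zero_right gen_ideal_0 ext_ideal_def)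
  next
    case False
    then obtain mr where m: "ord_weta \<omega> \<eta> g = ereal mr" using mlt by (cases "ord_weta \<omega> \<eta> g") auto
    define U where "U = (\<Union>i<n. supp (f i))"
    have finU: "finite U" unfolding U_def using ff by (auto simp: fsp_def)
    define L where "L = Min (insert 0 ((\<lambda>(b,a). real_of_ereal (val \<omega> \<eta> b a)) ` U))"
    have hL: "ereal L \<le> val \<omega> \<eta> b a" if "i < n" "f i b a \<noteq> 0" for i b a
    proof (cases "val \<omega> \<eta> b a = \<infinity>")
      case True then show ?thesis by simp
    next
      case False
      then have v: "val \<omega> \<eta> b a = ereal (real_of_ereal (val \<omega> \<eta> b a))"
        using val_nminf[OF eta] by (cases "val \<omega> \<eta> b a") auto
      have "(b, a) \<in> U" using that unfolding U_def supp_def by auto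
      then have "L \<le> real_of_ereal (val \<omega> \<eta> b a)" unfolding L_def using finU
        by (intro Min_le) auto
      then show ?thesis by (subst v) simp
    qed
    define C where "C = mr - L"
    define P where "P i = trunc_le \<omega> \<eta> C (\<phi> i)" for i
    define Q where "Q i = trunc_gt \<omega> \<eta> C (\<phi> i)" for i
    define G where "G = (\<Sum>i<n. pmult (P i) (f i))"
    define R where "R = (\<Sum>i<n. pmult (Q i) (f i))"
    have fP: "fsp (P i)" if "i < n" for i unfolding P_def using g(2) that by (intro trunc_le_fsp[OF li eta]) auto
    have "g = (\<Sum>i<n. pmult (P i) (f i) + pmult (Q i) (f i))"
    proof -
      have "pmult (\<phi> i) (f i) = pmult (P i) (f i) + pmult (Q i) (f i)" if "i \<in> {..<n}" for i
      proof -
        have "\<phi> i = P i + Q i" unfolding P_def Q_def by (rule trunc_split)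
        then have "pmult (\<phi> i) (f i) = pmult (P i + Q i) (f i)" by simp
        also have "\<dots> = pmult (P i) (f i) + pmult (Q i) (f i)" using ff that by (intro pmult_add_left) auto
        finally show ?thesis .
      qed
      then show ?thesis unfolding g(1) by (rule sum.cong[OF refl])
    qed
    then have gGR: "g = G + R" unfolding G_def R_def by (simp only: sum.distrib)
    have hR: "ereal mr < val \<omega> \<eta> \<beta> \<alpha>" if nz: "g \<beta> \<alpha> - G \<beta> \<alpha> \<noteq> 0" for \<beta> \<alpha>
    proof -
      have "R \<beta> \<alpha> \<noteq> 0" using nz gGR by (metis add_diff_cancel_left' plus_fun_apply)
      then have "(\<Sum>i<n. pmult (Q i) (f i) \<beta> \<alpha>) \<noteq> 0" unfolding R_def sum_fun_apply .
      then obtain i where i: "i \<in> {..<n}" "pmult (Q i) (f i) \<beta> \<alpha> \<noteq> 0"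
        by (rule sum.not_neutral_contains_not_neutral)
      have "ereal (C + L) < val \<omega> \<eta> \<beta> \<alpha>"
        by (rule pmult_val_gt[OF eta ff _ _ i(2)])
           (use i(1) hL trunc_gt_val in \<open>auto simp: Q_def\<close>)
      then show ?thesis unfolding C_def by simp
    qed
    have fG: "fsp G" unfolding G_def using fP ff by (intro fsp_sum) (auto intro: fsp_pmult)
    define T where "T = (\<Sum>r\<in>rep ` snd ` supp G.
      (if ord_weta \<omega> \<eta> (clsP r G) + ereal (wdot \<omega> r) = ereal mr then shift 0 r (in_weta \<omega> \<eta> (clsP r G)) else 0))"
    have dec: "in_weta \<omega> \<eta> g = T" unfolding T_def by (rule in_weta_decomp[OF eta fG m hR])
    have FI: "clsP r G \<in> I" for r
    proof -
      have "clsP r G = (\<Sum>i<n. clsP r (pmult (P i) (f i)))" unfolding G_def by (rule clsP_sum)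
      also have "\<dots> = (\<Sum>i<n. pmult (clsP r (P i)) (f i))"
        using fl by (intro sum.cong refl pmult_clsP[symmetric]) auto
      also have "\<dots> \<in> I"
      proof (rule ideal_sum[OF I finite_lessThan])
        fix i assume "i \<in> {..<n}"
        then have "laurent (clsP r (P i))" "f i \<in> I" using fP g(2) by (auto intro: laurent_clsP)
        then show "pmult (clsP r (P i)) (f i) \<in> I" using I unfolding laurent_ideal_def by blast
      qed
      finally show ?thesis .
    qed
    have fF: "fsp (in_weta \<omega> \<eta> (clsP r G))" for r
      using FI[of r] I unfolding laurent_ideal_def by (blast intro: fsp_in_weta laurent_fsp)
    have inI: "in_weta \<omega> \<eta> (clsP r G) \<in> In_weta \<omega> \<eta> I" for r
      by (rule in_Gens_In_weta[OF _ fF]) (use FI in \<open>auto simp: Gens_def\<close>)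
    let ?c = "\<lambda>r. ord_weta \<omega> \<eta> (clsP r G) + ereal (wdot \<omega> r) = ereal mr"
    have finR: "finite (rep ` snd ` supp G)" using fG by (simp add: fsp_def)
    have "pmult \<psi> T = (\<Sum>r\<in>rep ` snd ` supp G. pmult \<psi> (if ?c r then shift 0 r (in_weta \<omega> \<eta> (clsP r G)) else 0))"
      unfolding T_def by (rule pmult_sum_right[OF finR]) (simp add: fsp_shift fF)
    also have "\<dots> \<in> ext_ideal \<omega> (In_weta \<omega> \<eta> I)" unfolding ext_ideal_def
    proof (rule gen_ideal_sum[OF finR])
      fix r
      show "pmult \<psi> (if ?c r then shift 0 r (in_weta \<omega> \<eta> (clsP r G)) else 0) \<in> gen_ideal (spoly \<omega>) (In_weta \<omega> \<eta> I)"
      proof (cases "?c r")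
        case True
        have "pmult \<psi> (shift 0 r (in_weta \<omega> \<eta> (clsP r G))) = pmult (shift 0 r \<psi>) (in_weta \<omega> \<eta> (clsP r G))"
          by (simp add: pmult_shift_right[OF fF] pmult_shift_left[OF fF])
        moreover have "pmult (shift 0 r \<psi>) (in_weta \<omega> \<eta> (clsP r G)) \<in> gen_ideal (spoly \<omega>) (In_weta \<omega> \<eta> I)"
          by (rule gen_ideal_single[where C="spoly \<omega>", OF spoly_shift[OF psi] inI])
        ultimately show ?thesis using True by simp
      next
        case False
        then show ?thesis by (simp add: pmult_zero_right gen_ideal_0)
      qed
    qed
    finally show ?thesis unfolding ieq dec .
  qed
qed

lemma sub2:
  fixes \<omega> :: "'n::finite \<Rightarrow> real" and \<eta> :: "'m::finite \<Rightarrow> ereal"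
    and I :: "(('m \<Rightarrow> nat) \<Rightarrow> ('n \<Rightarrow> rat) \<Rightarrow> 'k::comm_ring_1) set"
  assumes li: "rat_lin_indep \<omega>" and eta: "\<forall>i. \<eta> i \<noteq> -\<infinity>" and I: "laurent_ideal I"
  shows "In_eta \<omega> \<eta> (ext_ideal \<omega> I) \<subseteq> ext_ideal \<omega> (In_weta \<omega> \<eta> I)"
proof
  fix x assume "x \<in> In_eta \<omega> \<eta> (ext_ideal \<omega> I)"
  then obtain n :: nat and \<psi> s where x: "x = (\<Sum>i<n. pmult (\<psi> i) (s i))"
      "\<forall>i<n. spoly \<omega> (\<psi> i) \<and> s i \<in> ({in_eta \<omega> \<eta> f | f. f \<in> ext_ideal \<omega> I \<and> ord_eta \<omega> \<eta> f < \<infinity>} \<union> {yvar i | i. \<eta> i = \<infinity>})"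
    unfolding In_eta_def by (rule gen_ideal_elims)
  show "x \<in> ext_ideal \<omega> (In_weta \<omega> \<eta> I)" unfolding x(1)
  proof (rule gen_ideal_sum[where C="spoly \<omega>", folded ext_ideal_def, OF finite_lessThan])
    fix i assume "i \<in> {..<n}"
    then have psi: "spoly \<omega> (\<psi> i)" and
      s: "s i \<in> {in_eta \<omega> \<eta> f | f. f \<in> ext_ideal \<omega> I \<and> ord_eta \<omega> \<eta> f < \<infinity>} \<union> {yvar i | i. \<eta> i = \<infinity>}"
      using x(2) by auto
    from s consider f where "f \<in> ext_ideal \<omega> I" "ord_eta \<omega> \<eta> f < \<infinity>" "s i = in_eta \<omega> \<eta> f"
      | j where "\<eta> j = \<infinity>" "s i = yvar j" by blast
    then show "pmult (\<psi> i) (s i) \<in> ext_ideal \<omega> (In_weta \<omega> \<eta> I)"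
    proof cases
      case 1
      then show ?thesis using sub2_gen[OF li eta I 1(1,2) psi] by simp
    next
      case 2
      have "s i \<in> In_weta \<omega> \<eta> I" using 2 by (intro in_Gens_In_weta) (auto simp: Gens_def fsp_yvar)
      then show ?thesis unfolding ext_ideal_def by (rule gen_ideal_single[where C="spoly \<omega>", OF psi])
    qed
  qed
qed

theorem proposition9p1:
  fixes \<omega> :: "'n::finite \<Rightarrow> real"
    and \<eta> :: "'m::finite \<Rightarrow> ereal"
    and I :: "(('m \<Rightarrow> nat) \<Rightarrow> ('n \<Rightarrow> rat) \<Rightarrow> 'k::field_char_0) set"
  assumes "alg_closed_field TYPE('k)"
    and "rat_lin_indep \<omega>"
    and "\<forall>i. \<eta> i \<noteq> -\<infinity>"
    and "laurent_ideal I"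
  shows "ext_ideal \<omega> (In_weta \<omega> \<eta> I) = In_eta \<omega> \<eta> (ext_ideal \<omega> I)"
  using sub1[OF assms(3,4)] sub2[OF assms(2,3,4)] by (rule antisym)

end
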